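(* In the setting described in the context, for all partitions $\lambda^{(1)},\dots,\lambda^{(N)}$, $$ \mathrm{Prob}\big(\lambda(v_i)=\lambda^{(i)}\ \text{for } 1\le i\le N\big)=\frac1Z\, s_{\lambda^{(1)}}(X^-_1)\,\prod_{i=1}^{N-1}\Big(\sum_{\nu} s_{\lambda^{(i)}/\nu}(X^+_i)\, s_{\lambda^{(i+1)}/\nu}(X^-_{i+1})\Big)\, s_{\lambda^{(N)}}(X^+_N), $$ where the sum is over all partitions $\nu$, $X^-_i=(x^-_m)_{m\in\mathbb Z+\frac12,\ u_{i-1}<m<v_i}$ and $X^+_i=(x^+_m)_{m\in\mathbb Z+\frac12,\ v_i<m<u_i}$. That is, the joint law of $(\lambda(v_1),\dots,\lambda(v_N))$ is a Schur process whose parameters are the polynomial specializations $X^\pm_i$.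
   Context: Fix an integer $N\ge1$ and integers $u_0<v_1<u_1<v_2<\dots<u_{N-1}<v_N<u_N$. For each integer $t$ with $u_0<t<u_N$ fix $q_t\in(0,1)$. For a half-integer $m\in(\mathbb Z+\frac12)\cap(u_0,u_N)$ write $m\in D^+$ if $v_i<m<u_i$ for some $1\le i\le N$, and $m\in D^-$ if $u_{i-1}<m<v_i$ for some $1\le i\le N$. For partitions, $\lambda\succ\mu$ (equivalently $\mu\prec\lambda$) means $\lambda_1\ge\mu_1\ge\lambda_2\ge\mu_2\ge\cdots$. A configuration is a sequence of partitions $(\lambda(t))_{t\in\mathbb Z}$ such that: - $\lambda(t)=\emptyset$ for $t\le u_0$ and for $t\ge u_N$; - for every half-integer $m\in(u_0,u_N)$: if $m\in D^-$ then $\lambda(m-\frac12)\prec\lambda(m+\frac12)$, and if $m\in D^+$ then $\lambda(m-\frac12)\succ\lambda(m+\frac12)$. These are exactly the sequences of diagonal slices of skew plane partitions with given inner shape (corners at the $v_i,u_i$) inside a box. The weight of a configuration is $W=\prod_{u_0<t<u_N} q_t^{|\lambda(t)|}$, where $|\lambda|=\sum_i\lambda_i$. The partition function is $Z=\sum W$ over all configurations, and the probability of a configuration is $W/Z$. Put $x^+_m=\prod_{t\in\mathbb Z,\,u_0<t<m}q_t$ and $x^-_m=(x^+_m)^{-1}$ for half-integers $m$. Here $s_{\lambda/\mu}(x_1,\dots,x_n)$ is the skew Schur polynomial, which is zero unless $\mu\subset\lambda$, and $s_\lambda=s_{\lambda/\emptyset}$. *)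

theory Defs
  imports "HOL-Analysis.Analysis"
begin

text \<open>Partitions are weakly decreasing functions nat => nat with finite support;
  the part lambda_(i+1) is stored at index i (0-based).\<close>

definition partitions :: "(nat \<Rightarrow> nat) set" where
  "partitions = {l. (\<forall>i. l (Suc i) \<le> l i) \<and> finite {i. l i \<noteq> 0}}"

definition empty_part :: "nat \<Rightarrow> nat" where
  "empty_part = (\<lambda>_. 0)"

definition psize :: "(nat \<Rightarrow> nat) \<Rightarrow> nat" where
  "psize l = (\<Sum>i\<in>{i. l i \<noteq> 0}. l i)"

definition succ_part :: "(nat \<Rightarrow> nat) \<Rightarrow> (nat \<Rightarrow> nat) \<Rightarrow> bool" where
  "succ_part l m \<longleftrightarrow> (\<forall>i. m i \<le> l i \<and> l (Suc i) \<le> m i)"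

definition subpart :: "(nat \<Rightarrow> nat) \<Rightarrow> (nat \<Rightarrow> nat) \<Rightarrow> bool" where
  "subpart m l \<longleftrightarrow> (\<forall>i. m i \<le> l i)"

definition skew_cells :: "(nat \<Rightarrow> nat) \<Rightarrow> (nat \<Rightarrow> nat) \<Rightarrow> (nat \<times> nat) set" where
  "skew_cells l m = {(i, j). m i \<le> j \<and> j < l i}"

definition ssyt :: "(nat \<Rightarrow> nat) \<Rightarrow> (nat \<Rightarrow> nat) \<Rightarrow> nat \<Rightarrow> ((nat \<times> nat) \<Rightarrow> nat) set" where
  "ssyt l m n = {T \<in> skew_cells l m \<rightarrow>\<^sub>E {0..<n}.
      (\<forall>i j. (i, j) \<in> skew_cells l m \<and> (i, Suc j) \<in> skew_cells l m \<longrightarrow> T (i, j) \<le> T (i, Suc j)) \<and>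
      (\<forall>i j. (i, j) \<in> skew_cells l m \<and> (Suc i, j) \<in> skew_cells l m \<longrightarrow> T (i, j) < T (Suc i, j))}"

definition skew_schur :: "(nat \<Rightarrow> nat) \<Rightarrow> (nat \<Rightarrow> nat) \<Rightarrow> real list \<Rightarrow> real" where
  "skew_schur l m xs = (if subpart m l then
      (\<Sum>T\<in>ssyt l m (length xs). \<Prod>c\<in>skew_cells l m. xs ! (T c)) else 0)"

definition schur :: "(nat \<Rightarrow> nat) \<Rightarrow> real list \<Rightarrow> real" where
  "schur l xs = skew_schur l empty_part xs"

text \<open>The half-integer m = k + 1/2 is encoded by the integer k.\<close>

definition in_Dminus :: "nat \<Rightarrow> (nat \<Rightarrow> int) \<Rightarrow> (nat \<Rightarrow> int) \<Rightarrow> int \<Rightarrow> bool" where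
  "in_Dminus N u v k \<longleftrightarrow> (\<exists>i\<in>{1..N}. u (i - 1) \<le> k \<and> k + 1 \<le> v i)"

definition in_Dplus :: "nat \<Rightarrow> (nat \<Rightarrow> int) \<Rightarrow> (nat \<Rightarrow> int) \<Rightarrow> int \<Rightarrow> bool" where
  "in_Dplus N u v k \<longleftrightarrow> (\<exists>i\<in>{1..N}. v i \<le> k \<and> k + 1 \<le> u i)"

definition configs :: "nat \<Rightarrow> (nat \<Rightarrow> int) \<Rightarrow> (nat \<Rightarrow> int) \<Rightarrow> (int \<Rightarrow> nat \<Rightarrow> nat) set" where
  "configs N u v = {L. (\<forall>t. L t \<in> partitions) \<and>
      (\<forall>t. (t \<le> u 0 \<or> u N \<le> t) \<longrightarrow> L t = empty_part) \<and>
      (\<forall>k. u 0 \<le> k \<and> k + 1 \<le> u N \<longrightarrow>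
          (in_Dminus N u v k \<longrightarrow> succ_part (L (k + 1)) (L k)) \<and>
          (in_Dplus N u v k \<longrightarrow> succ_part (L k) (L (k + 1))))}"

definition weight :: "nat \<Rightarrow> (nat \<Rightarrow> int) \<Rightarrow> (int \<Rightarrow> real) \<Rightarrow> (int \<Rightarrow> nat \<Rightarrow> nat) \<Rightarrow> real" where
  "weight N u q L = (\<Prod>t\<in>{u 0<..<u N}. q t ^ psize (L t))"

definition partition_fn :: "nat \<Rightarrow> (nat \<Rightarrow> int) \<Rightarrow> (nat \<Rightarrow> int) \<Rightarrow> (int \<Rightarrow> real) \<Rightarrow> real" where
  "partition_fn N u v q = (\<Sum>\<^sub>\<infinity>L\<in>configs N u v. weight N u q L)"

definition prob :: "nat \<Rightarrow> (nat \<Rightarrow> int) \<Rightarrow> (nat \<Rightarrow> int) \<Rightarrow> (int \<Rightarrow> real)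
    \<Rightarrow> ((int \<Rightarrow> nat \<Rightarrow> nat) \<Rightarrow> bool) \<Rightarrow> real" where
  "prob N u v q E = (\<Sum>\<^sub>\<infinity>L\<in>{L \<in> configs N u v. E L}. weight N u q L) / partition_fn N u v q"

text \<open>x^+_{k+1/2} = prod of q_t over u_0 < t < k + 1/2, i.e. u_0 < t <= k\<close>
definition xplus :: "(nat \<Rightarrow> int) \<Rightarrow> (int \<Rightarrow> real) \<Rightarrow> int \<Rightarrow> real" where
  "xplus u q k = (\<Prod>t\<in>{u 0<..k}. q t)"

definition xminus :: "(nat \<Rightarrow> int) \<Rightarrow> (int \<Rightarrow> real) \<Rightarrow> int \<Rightarrow> real" where
  "xminus u q k = inverse (xplus u q k)"

text \<open>X^-_i: half-integers u_{i-1} < m < v_i; X^+_i: half-integers v_i < m < u_i\<close>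
definition Xminus :: "(nat \<Rightarrow> int) \<Rightarrow> (nat \<Rightarrow> int) \<Rightarrow> (int \<Rightarrow> real) \<Rightarrow> nat \<Rightarrow> real list" where
  "Xminus u v q i = map (xminus u q) [u (i - 1) .. v i - 1]"

definition Xplus :: "(nat \<Rightarrow> int) \<Rightarrow> (nat \<Rightarrow> int) \<Rightarrow> (int \<Rightarrow> real) \<Rightarrow> nat \<Rightarrow> real list" where
  "Xplus u v q i = map (xplus u q) [v i .. u i - 1]"

end

theory Submission
  imports Defs
begin


lemma partitionsD: "l \<in> partitions \<Longrightarrow> l (Suc i) \<le> l i" "l \<in> partitions \<Longrightarrow> finite {i. l i \<noteq> 0}"
  by (auto simp: partitions_def)

lemma finite_below:
  assumes "finite {i. l i \<noteq> 0}"
  shows "finite {f::nat\<Rightarrow>nat. \<forall>i. f i \<le> l i}"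
proof -
  let ?A = "{i. l i \<noteq> 0}"
  have "{f::nat\<Rightarrow>nat. \<forall>i. f i \<le> l i} \<subseteq> {f. \<forall>x. (x \<in> ?A \<longrightarrow> f x \<in> {0..sum l ?A}) \<and> (x \<notin> ?A \<longrightarrow> f x = 0)}"
  proof (intro subsetI CollectI allI conjI impI)
    fix f x assume h: "f \<in> {f::nat\<Rightarrow>nat. \<forall>i. f i \<le> l i}" 
    then have fx: "f x \<le> l x" by auto
    show "x \<notin> ?A \<Longrightarrow> f x = 0" using fx by auto
    assume "x \<in> ?A"
    then have "l x \<le> sum l ?A" using assms by (intro member_le_sum) auto
    then show "f x \<in> {0..sum l ?A}" using fx by auto
  qed
  then show ?thesis by (rule finite_subset) (intro finite_set_of_finite_funs assms, simp)
qed


lemma psize_eq: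
  assumes "{i. l i \<noteq> 0} \<subseteq> {..<M}"
  shows "psize l = (\<Sum>i<M. l i)"
  unfolding psize_def using assms by (intro sum.mono_neutral_left) auto

lemma fin_supp_bound: "finite {i. (l::nat\<Rightarrow>nat) i \<noteq> 0} \<Longrightarrow> \<exists>M. {i. l i \<noteq> 0} \<subseteq> {..<M}"
  by (simp add: finite_nat_iff_bounded)

lemma supp_mono: "subpart m l \<Longrightarrow> {i. m i \<noteq> 0} \<subseteq> {i. l i \<noteq> 0}"
proof
  fix x assume "x \<in> {i. m i \<noteq> 0}" "subpart m l"
  then have "m x \<noteq> 0" "m x \<le> l x" by (auto simp: subpart_def)
  then show "x \<in> {i. l i \<noteq> 0}" by simp
qed

lemma fin_supp_mono: "subpart m l \<Longrightarrow> finite {i. l i \<noteq> 0} \<Longrightarrow> finite {i. m i \<noteq> 0}"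
  using supp_mono by (rule finite_subset)

lemma psize_mono:
  assumes "subpart m l" "finite {i. l i \<noteq> 0}"
  shows "psize m \<le> psize l"
proof -
  obtain M where M: "{i. l i \<noteq> 0} \<subseteq> {..<M}" using fin_supp_bound[OF assms(2)] by blast
  have "psize m = (\<Sum>i<M. m i)" using M supp_mono[OF assms(1)] by (intro psize_eq) auto
  also have "\<dots> \<le> (\<Sum>i<M. l i)" using assms(1) by (intro sum_mono) (auto simp: subpart_def)
  also have "\<dots> = psize l" using M by (intro psize_eq[symmetric])
  finally show ?thesis .
qed

lemma cells_Sigma:
  assumes "{i. l i \<noteq> 0} \<subseteq> {..<M}"
  shows "skew_cells l m = Sigma {..<M} (\<lambda>i. {m i..<l i})"
proof -
  have "i < M" if "m i \<le> j" "j < l i" for i j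
  proof -
    have "l i \<noteq> 0" using that by simp
    then show ?thesis using assms by auto
  qed
  then show ?thesis unfolding skew_cells_def by auto
qed

lemma finite_cells: "finite {i. l i \<noteq> 0} \<Longrightarrow> finite (skew_cells l m)"
proof -
  assume "finite {i. l i \<noteq> 0}"
  then obtain M where "{i. l i \<noteq> 0} \<subseteq> {..<M}" using fin_supp_bound by blast
  then show ?thesis by (simp add: cells_Sigma)
qed

lemma card_cells:
  assumes "subpart m l" "finite {i. l i \<noteq> 0}"
  shows "card (skew_cells l m) = psize l - psize m"
proof -
  obtain M where M: "{i. l i \<noteq> 0} \<subseteq> {..<M}" using fin_supp_bound[OF assms(2)] by blast
  have "card (skew_cells l m) = (\<Sum>i<M. l i - m i)"
    by (simp add: cells_Sigma[OF M] card_SigmaI)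
  also have "\<dots> = (\<Sum>i<M. l i) - (\<Sum>i<M. m i)"
    using assms(1) by (intro sum_subtractf_nat) (auto simp: subpart_def)
  also have "\<dots> = psize l - psize m"
    using M supp_mono[OF assms(1)] by (simp add: psize_eq[of l M] psize_eq[of m M])
  finally show ?thesis .
qed

definition Kset :: "(nat\<Rightarrow>nat) \<Rightarrow> (nat\<Rightarrow>nat) \<Rightarrow> (nat\<Rightarrow>nat) set" where
  "Kset m l = {k. succ_part k m \<and> subpart k l}"

fun chainS :: "(nat\<Rightarrow>nat) \<Rightarrow> (nat\<Rightarrow>nat) \<Rightarrow> real list \<Rightarrow> real" where
  "chainS m l [] = (if m = l then 1 else 0)"
| "chainS m l (x # xs) = (\<Sum>k\<in>Kset m l. x ^ (psize k - psize m) * chainS k l xs)"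

lemma succ_subpart: "succ_part k m \<Longrightarrow> subpart m k"
  by (auto simp: succ_part_def subpart_def)

lemma subpart_trans: "subpart a b \<Longrightarrow> subpart b c \<Longrightarrow> subpart a c"
  by (auto simp: subpart_def intro: le_trans)

lemma Kset_finite: "finite {i. l i \<noteq> 0} \<Longrightarrow> finite (Kset m l)"
  by (rule finite_subset[OF _ finite_below]) (auto simp: Kset_def subpart_def)

lemma Kset_sub: "k \<in> Kset m l \<Longrightarrow> subpart m k \<and> subpart k l"
  by (auto simp: Kset_def succ_subpart)

lemma chainS_nz: assumes "chainS m l xs \<noteq> 0" shows "subpart m l"
proof (cases xs)
  case Nil
  then show ?thesis using assms by (auto simp: subpart_def split: if_splits)
next
  case (Cons x xs')
  then have "Kset m l \<noteq> {}" using assms by auto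
  then show ?thesis using Kset_sub subpart_trans by blast
qed

lemma succ_partition: "succ_part k m \<Longrightarrow> subpart k l \<Longrightarrow> finite {i. l i \<noteq> 0} \<Longrightarrow> k \<in> partitions"
  unfolding partitions_def using fin_supp_mono[of k l]
  by (auto simp: succ_part_def intro: le_trans)


definition glue :: "(nat\<Rightarrow>nat) \<Rightarrow> (nat\<Rightarrow>nat) \<Rightarrow> (nat\<Rightarrow>nat) \<Rightarrow> (nat\<times>nat \<Rightarrow> nat) \<Rightarrow> (nat\<times>nat \<Rightarrow> nat)" where
  "glue m l k T = (\<lambda>c. if c \<in> skew_cells l m then (if c \<in> skew_cells k m then 0 else Suc (T c)) else undefined)"

definition kapT :: "(nat\<Rightarrow>nat) \<Rightarrow> (nat\<Rightarrow>nat) \<Rightarrow> (nat\<times>nat \<Rightarrow> nat) \<Rightarrow> nat \<Rightarrow> nat" where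
  "kapT m l T i = (LEAST j. m i \<le> j \<and> (l i \<le> j \<or> T (i,j) \<noteq> 0))"

lemma ssytD:
  assumes "T \<in> ssyt l m n"
  shows "T \<in> skew_cells l m \<rightarrow>\<^sub>E {0..<n}"
    "\<And>i j. (i, j) \<in> skew_cells l m \<Longrightarrow> (i, Suc j) \<in> skew_cells l m \<Longrightarrow> T (i, j) \<le> T (i, Suc j)"
    "\<And>i j. (i, j) \<in> skew_cells l m \<Longrightarrow> (Suc i, j) \<in> skew_cells l m \<Longrightarrow> T (i, j) < T (Suc i, j)"
  using assms unfolding ssyt_def by auto

lemma ssytI:
  assumes "T \<in> skew_cells l m \<rightarrow>\<^sub>E {0..<n}"
    "\<And>i j. (i, j) \<in> skew_cells l m \<Longrightarrow> (i, Suc j) \<in> skew_cells l m \<Longrightarrow> T (i, j) \<le> T (i, Suc j)"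
    "\<And>i j. (i, j) \<in> skew_cells l m \<Longrightarrow> (Suc i, j) \<in> skew_cells l m \<Longrightarrow> T (i, j) < T (Suc i, j)"
  shows "T \<in> ssyt l m n"
  using assms unfolding ssyt_def by auto

lemma cells_iff: "(i,j) \<in> skew_cells l m \<longleftrightarrow> m i \<le> j \<and> j < l i"
  by (simp add: skew_cells_def)

lemma finite_ssyt: "finite {i. l i \<noteq> 0} \<Longrightarrow> finite (ssyt l m n)"
  by (rule finite_subset[of _ "skew_cells l m \<rightarrow>\<^sub>E {0..<n}"]) (auto simp: ssyt_def finite_cells intro!: finite_PiE)

lemma glue_ssyt:
  assumes l: "l \<in> partitions" and k: "k \<in> Kset m l" and T: "T \<in> ssyt l k n"
  shows "glue m l k T \<in> ssyt l m (Suc n)"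
proof -
  have sk: "succ_part k m" and kl: "subpart k l" using k by (auto simp: Kset_def)
  then have mk: "m i \<le> k i" "k (Suc i) \<le> m i" "k i \<le> l i" for i by (auto simp: succ_part_def subpart_def)
  note T1 = ssytD(1)[OF T] and T2 = ssytD(2)[OF T] and T3 = ssytD(3)[OF T]
  have Tv: "T c < n" if "c \<in> skew_cells l k" for c using T1 that by auto
  show ?thesis
  proof (rule ssytI)
    show "glue m l k T \<in> skew_cells l m \<rightarrow>\<^sub>E {0..<Suc n}"
    proof (rule PiE_I)
      fix c assume c: "c \<in> skew_cells l m"
      show "glue m l k T c \<in> {0..<Suc n}"
      proof (cases "c \<in> skew_cells k m")
        case False
        then have "c \<in> skew_cells l k" using c by (cases c) (auto simp: cells_iff)
        then show ?thesis using False c Tv by (auto simp: glue_def)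
      qed (use c in \<open>auto simp: glue_def\<close>)
    qed (auto simp: glue_def)
  next
    fix i j assume a: "(i, j) \<in> skew_cells l m" "(i, Suc j) \<in> skew_cells l m"
    show "glue m l k T (i, j) \<le> glue m l k T (i, Suc j)"
    proof (cases "j < k i")
      case True
      then show ?thesis using a by (auto simp: glue_def cells_iff)
    next
      case False
      then have "(i, j) \<in> skew_cells l k" "(i, Suc j) \<in> skew_cells l k" using a by (auto simp: cells_iff)
      then show ?thesis using a False T2 by (auto simp: glue_def cells_iff)
    qed
  next
    fix i j assume a: "(i, j) \<in> skew_cells l m" "(Suc i, j) \<in> skew_cells l m"
    have nz: "\<not> j < k (Suc i)" using a mk(2)[of i] by (auto simp: cells_iff)
    then have b: "(Suc i, j) \<in> skew_cells l k" using a by (auto simp: cells_iff)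
    show "glue m l k T (i, j) < glue m l k T (Suc i, j)"
    proof (cases "j < k i")
      case True
      then show ?thesis using a nz by (auto simp: glue_def cells_iff)
    next
      case False
      then have "(i, j) \<in> skew_cells l k" using a by (auto simp: cells_iff)
      then show ?thesis using a False nz T3[OF _ b] by (auto simp: glue_def cells_iff)
    qed
  qed
qed

lemma glue_inj:
  assumes "k1 \<in> Kset m l" "k2 \<in> Kset m l" "T1 \<in> ssyt l k1 n" "T2 \<in> ssyt l k2 n"
    and eq: "glue m l k1 T1 = glue m l k2 T2"
  shows "k1 = k2 \<and> T1 = T2"
proof -
  have b: "m i \<le> k1 i" "k1 i \<le> l i" "m i \<le> k2 i" "k2 i \<le> l i" for i
    using assms(1,2) Kset_sub by (auto simp: subpart_def)
  have "k1 i = k2 i" for i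
  proof (rule ccontr)
    assume "k1 i \<noteq> k2 i"
    then consider "k1 i < k2 i" | "k2 i < k1 i" by linarith
    then show False
    proof cases
      case 1
      let ?c = "(i, k1 i)"
      have "glue m l k1 T1 ?c \<noteq> 0" "glue m l k2 T2 ?c = 0" using 1 b[of i] by (auto simp: glue_def cells_iff)
      then show False using eq by simp
    next
      case 2
      let ?c = "(i, k2 i)"
      have "glue m l k2 T2 ?c \<noteq> 0" "glue m l k1 T1 ?c = 0" using 2 b[of i] by (auto simp: glue_def cells_iff)
      then show False using eq by simp
    qed
  qed
  then have k: "k1 = k2" by auto
  have "T1 c = T2 c" for c
  proof (cases "c \<in> skew_cells l k1")
    case True
    obtain i j :: nat where c: "c = (i,j)" by (cases c)
    have "glue m l k1 T1 c = Suc (T1 c)" "glue m l k2 T2 c = Suc (T2 c)"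
      using True b[of i] k unfolding c by (auto simp: glue_def cells_iff)
    then show ?thesis using eq by simp
  next
    case False
    then show ?thesis using ssytD(1)[OF assms(3)] ssytD(1)[OF assms(4)] k
      by (cases c) (auto simp: PiE_def extensional_def)
  qed
  then show ?thesis using k by auto
qed

lemma glue_surj:
  assumes l: "l \<in> partitions" and mp: "m \<in> partitions" and ml: "subpart m l" and T: "T \<in> ssyt l m (Suc n)"
  shows "kapT m l T \<in> Kset m l \<and> restrict (\<lambda>c. T c - 1) (skew_cells l (kapT m l T)) \<in> ssyt l (kapT m l T) n
     \<and> T = glue m l (kapT m l T) (restrict (\<lambda>c. T c - 1) (skew_cells l (kapT m l T)))"
proof -
  let ?K = "kapT m l T"
  note T1 = ssytD(1)[OF T] and T2 = ssytD(2)[OF T] and T3 = ssytD(3)[OF T]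
  have ml': "m i \<le> l i" for i using ml by (auto simp: subpart_def)
  have lmono: "l (Suc i) \<le> l i" for i using l by (auto simp: partitions_def)
  have K1: "m i \<le> ?K i \<and> (l i \<le> ?K i \<or> T (i, ?K i) \<noteq> 0)" for i
    unfolding kapT_def by (rule LeastI[of _ "l i"]) (use ml' in auto)
  have K2: "?K i \<le> l i" for i
    unfolding kapT_def by (rule Least_le) (use ml' in auto)
  have K3: "T (i, j) = 0" if "m i \<le> j" "j < ?K i" for i j
    using not_less_Least[of j "\<lambda>j. m i \<le> j \<and> (l i \<le> j \<or> T (i,j) \<noteq> 0)"] that K2[of i]
    unfolding kapT_def by auto
  have rowmono: "T (i, ?K i) \<le> T (i, ?K i + d)" if "?K i + d < l i" for i d
    using that
  proof (induction d)
    case (Suc d)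
    then have "T (i, ?K i + d) \<le> T (i, Suc (?K i + d))"
      using K1[of i] by (intro T2) (auto simp: cells_iff)
    then show ?case using Suc by simp
  qed simp
  have K4: "T (i, j) \<noteq> 0" if "?K i \<le> j" "j < l i" for i j
  proof -
    have "T (i, ?K i) \<noteq> 0" using K1[of i] that by auto
    moreover have "T (i, ?K i) \<le> T (i, ?K i + (j - ?K i))" using that by (intro rowmono) auto
    ultimately show ?thesis using that by simp
  qed
  have Kmono: "?K (Suc i) \<le> m i" for i
  proof (rule ccontr)
    assume "\<not> ?K (Suc i) \<le> m i"
    define j where "j = max (m i) (m (Suc i))"
    have "m (Suc i) \<le> m i" using mp by (auto simp: partitions_def)
    then have j1: "j < ?K (Suc i)" using \<open>\<not> ?K (Suc i) \<le> m i\<close> by (auto simp: j_def)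
    have c1: "(Suc i, j) \<in> skew_cells l m" using j1 K2[of "Suc i"] by (auto simp: cells_iff j_def)
    have c0: "(i, j) \<in> skew_cells l m" using j1 K2[of "Suc i"] lmono[of i] by (auto simp: cells_iff j_def)
    have "T (Suc i, j) = 0" using j1 by (intro K3) (auto simp: j_def)
    then show False using T3[OF c0 c1] by simp
  qed
  have KK: "?K \<in> Kset m l" unfolding Kset_def succ_part_def subpart_def using K1 K2 Kmono by auto
  let ?T' = "restrict (\<lambda>c. T c - 1) (skew_cells l ?K)"
  have subc: "c \<in> skew_cells l m" if "c \<in> skew_cells l ?K" for c
    using that K1 by (cases c) (auto simp: cells_iff intro: le_trans)
  have Tnz: "T c \<noteq> 0" if "c \<in> skew_cells l ?K" for c
    using that K4 by (cases c) (auto simp: cells_iff)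
  have Tlt: "T c < Suc n" if "c \<in> skew_cells l m" for c using T1 that by auto
  have T'': "?T' \<in> ssyt l ?K n"
  proof (rule ssytI)
    show "?T' \<in> skew_cells l ?K \<rightarrow>\<^sub>E {0..<n}"
    proof (rule PiE_I)
      fix c assume "c \<in> skew_cells l ?K"
      then have "T c < Suc n" "T c \<noteq> 0" using Tlt subc Tnz by auto
      then show "?T' c \<in> {0..<n}" using \<open>c \<in> skew_cells l ?K\<close> by auto
    qed auto
  next
    fix i j assume a: "(i, j) \<in> skew_cells l ?K" "(i, Suc j) \<in> skew_cells l ?K"
    then have "T (i, j) \<le> T (i, Suc j)" using T2[OF subc subc] by auto
    then show "?T' (i, j) \<le> ?T' (i, Suc j)" using a by auto
  next
    fix i j assume a: "(i, j) \<in> skew_cells l ?K" "(Suc i, j) \<in> skew_cells l ?K"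
    then have "T (i, j) < T (Suc i, j)" "T (i,j) \<noteq> 0" using T3[OF subc subc] Tnz[of "(i,j)"] by auto
    then show "?T' (i, j) < ?T' (Suc i, j)" using a by auto
  qed
  have "T = glue m l ?K ?T'"
  proof
    fix c
    obtain i j :: nat where c: "c = (i,j)" by (cases c)
    show "T c = glue m l ?K ?T' c"
    proof (cases "c \<in> skew_cells l m")
      case False
      then show ?thesis using T1 unfolding c by (auto simp: glue_def PiE_def extensional_def)
    next
      case True
      show ?thesis
      proof (cases "j < ?K i")
        case True
        then show ?thesis using \<open>c \<in> skew_cells l m\<close> K3 by (auto simp: glue_def cells_iff c)
      next
        case False
        then have "c \<in> skew_cells l ?K" using True by (auto simp: c cells_iff)
        then show ?thesis using False True Tnz by (auto simp: glue_def cells_iff c)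
      qed
    qed
  qed
  then show ?thesis using KK T'' by blast
qed


lemma glue_weight:
  assumes l: "l \<in> partitions" and k: "k \<in> Kset m l"
  shows "(\<Prod>c\<in>skew_cells l m. (x # xs) ! (glue m l k T c)) = x ^ (psize k - psize m) * (\<Prod>c\<in>skew_cells l k. xs ! (T c))"
proof -
  have mk: "subpart m k" and kl: "subpart k l" using Kset_sub[OF k] by auto
  have fl: "finite {i. l i \<noteq> 0}" using l by (auto simp: partitions_def)
  have fk: "finite {i. k i \<noteq> 0}" using fin_supp_mono[OF kl fl] .
  have un: "skew_cells l m = skew_cells k m \<union> skew_cells l k"
    using mk kl by (auto simp: skew_cells_def subpart_def intro: le_trans less_le_trans)
  have dj: "skew_cells k m \<inter> skew_cells l k = {}" by (auto simp: skew_cells_def)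
  have "(\<Prod>c\<in>skew_cells l m. (x # xs) ! (glue m l k T c))
      = (\<Prod>c\<in>skew_cells k m. (x # xs) ! (glue m l k T c)) * (\<Prod>c\<in>skew_cells l k. (x # xs) ! (glue m l k T c))"
    unfolding un by (rule prod.union_disjoint) (use dj finite_cells[OF fk] finite_cells[OF fl] in auto)
  also have "(\<Prod>c\<in>skew_cells k m. (x # xs) ! (glue m l k T c)) = (\<Prod>c\<in>skew_cells k m. x)"
    using un by (intro prod.cong) (auto simp: glue_def)
  also have "\<dots> = x ^ (psize k - psize m)" using card_cells[OF mk fk] by simp
  also have "(\<Prod>c\<in>skew_cells l k. (x # xs) ! (glue m l k T c)) = (\<Prod>c\<in>skew_cells l k. xs ! (T c))"
    using un dj by (intro prod.cong) (auto simp: glue_def)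
  finally show ?thesis .
qed

lemma schur_chain:
  assumes l: "l \<in> partitions"
  shows "m \<in> partitions \<Longrightarrow> skew_schur l m xs = chainS m l xs"
proof (induction xs arbitrary: m)
  case Nil
  show ?case
  proof (cases "subpart m l")
    case False
    then show ?thesis using chainS_nz[of m l "[]"] by (auto simp: skew_schur_def)
  next
    case True
    show ?thesis
    proof (cases "m = l")
      case True
      have "skew_cells l l = {}" by (auto simp: skew_cells_def)
      then have "ssyt l l 0 = {\<lambda>_. undefined}" by (auto simp: ssyt_def)
      then show ?thesis using True by (simp add: skew_schur_def subpart_def \<open>skew_cells l l = {}\<close>)
    next
      case False
      then obtain i where "m i \<noteq> l i" by auto
      then have "m i < l i" using True by (auto simp: subpart_def le_neq_implies_less)
      then have "(i, m i) \<in> skew_cells l m" by (auto simp: cells_iff)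
      then have "skew_cells l m \<rightarrow>\<^sub>E {0..<0::nat} = {}" by (auto simp: PiE_eq_empty_iff)
      then have "ssyt l m 0 = {}" by (auto simp: ssyt_def)
      then show ?thesis using False by (simp add: skew_schur_def)
    qed
  qed
next
  case (Cons x xs)
  have fl: "finite {i. l i \<noteq> 0}" using l by (auto simp: partitions_def)
  show ?case
  proof (cases "subpart m l")
    case False
    then have "Kset m l = {}" using Kset_sub subpart_trans by blast
    then show ?thesis using False by (simp add: skew_schur_def)
  next
    case True
    let ?S = "Sigma (Kset m l) (\<lambda>k. ssyt l k (length xs))"
    let ?g = "\<lambda>p. glue m l (fst p) (snd p)"
    have inj: "inj_on ?g ?S"
      by (rule inj_onI) (use glue_inj in \<open>auto simp: prod_eq_iff\<close>)
    have img: "?g ` ?S = ssyt l m (Suc (length xs))"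
    proof
      show "?g ` ?S \<subseteq> ssyt l m (Suc (length xs))" using glue_ssyt[OF l] by auto
    next
      show "ssyt l m (Suc (length xs)) \<subseteq> ?g ` ?S"
      proof
        fix T assume "T \<in> ssyt l m (Suc (length xs))"
        from glue_surj[OF l Cons.prems True this] show "T \<in> ?g ` ?S"
          by (intro image_eqI[where x="(kapT m l T, restrict (\<lambda>c. T c - 1) (skew_cells l (kapT m l T)))"]) auto
      qed
    qed
    have "skew_schur l m (x # xs) = (\<Sum>T\<in>ssyt l m (Suc (length xs)). \<Prod>c\<in>skew_cells l m. (x # xs) ! (T c))"
      using True by (simp add: skew_schur_def)
    also have "\<dots> = (\<Sum>p\<in>?S. \<Prod>c\<in>skew_cells l m. (x # xs) ! (?g p c))"
      unfolding img[symmetric] by (rule sum.reindex[OF inj, unfolded comp_def])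
    also have "\<dots> = (\<Sum>k\<in>Kset m l. \<Sum>T\<in>ssyt l k (length xs). \<Prod>c\<in>skew_cells l m. (x # xs) ! (glue m l k T c))"
      by (subst sum.Sigma) (auto simp: split_def intro: Kset_finite[OF fl] finite_ssyt[OF fl])
    also have "\<dots> = (\<Sum>k\<in>Kset m l. x ^ (psize k - psize m) * (\<Sum>T\<in>ssyt l k (length xs). \<Prod>c\<in>skew_cells l k. xs ! (T c)))"
      by (intro sum.cong refl) (simp add: glue_weight[OF l] sum_distrib_left)
    also have "\<dots> = (\<Sum>k\<in>Kset m l. x ^ (psize k - psize m) * chainS k l xs)"
    proof (intro sum.cong refl)
      fix k assume k: "k \<in> Kset m l"
      then have kp: "k \<in> partitions" "subpart k l" using succ_partition[OF _ _ fl] by (auto simp: Kset_def)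
      show "x ^ (psize k - psize m) * (\<Sum>T\<in>ssyt l k (length xs). \<Prod>c\<in>skew_cells l k. xs ! (T c)) =
         x ^ (psize k - psize m) * chainS k l xs"
        using Cons.IH[OF kp(1)] kp(2) by (simp add: skew_schur_def)
    qed
    finally show ?thesis by simp
  qed
qed


definition Aset :: "(nat\<Rightarrow>nat) \<Rightarrow> (nat\<Rightarrow>nat) \<Rightarrow> (nat\<Rightarrow>nat) set" where
  "Aset m r = {k. succ_part k m \<and> succ_part r k}"

definition bka :: "(nat\<Rightarrow>nat) \<Rightarrow> (nat\<Rightarrow>nat) \<Rightarrow> nat \<Rightarrow> nat" where
  "bka m r i = max (m i) (r (Suc i))"
definition bkb :: "(nat\<Rightarrow>nat) \<Rightarrow> (nat\<Rightarrow>nat) \<Rightarrow> nat \<Rightarrow> nat" where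
  "bkb m r i = (case i of 0 \<Rightarrow> r 0 | Suc j \<Rightarrow> min (r (Suc j)) (m j))"

lemma nat_refl_aux: "(a::nat) \<le> k \<and> k \<le> b \<Longrightarrow> a \<le> a + b - k \<and> a + b - k \<le> b" by arith

lemma Aset_iff: "k \<in> Aset m r \<longleftrightarrow> (\<forall>i. bka m r i \<le> k i \<and> k i \<le> bkb m r i)"
proof
  assume "k \<in> Aset m r"
  then have h: "m i \<le> k i" "k (Suc i) \<le> m i" "k i \<le> r i" "r (Suc i) \<le> k i" for i
    by (auto simp: Aset_def succ_part_def)
  show "\<forall>i. bka m r i \<le> k i \<and> k i \<le> bkb m r i"
  proof
    fix i show "bka m r i \<le> k i \<and> k i \<le> bkb m r i"
      using h by (cases i) (auto simp: bka_def bkb_def)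
  qed
next
  assume h: "\<forall>i. bka m r i \<le> k i \<and> k i \<le> bkb m r i"
  have "m i \<le> k i \<and> k (Suc i) \<le> m i \<and> k i \<le> r i \<and> r (Suc i) \<le> k i" for i
  proof -
    have 1: "bka m r i \<le> k i" "k i \<le> bkb m r i" "k (Suc i) \<le> bkb m r (Suc i)" using h by auto
    have "k i \<le> r i" using 1(2) by (cases i) (auto simp: bkb_def)
    then show ?thesis using 1 by (auto simp: bka_def bkb_def)
  qed
  then show "k \<in> Aset m r" by (auto simp: Aset_def succ_part_def)
qed

lemma bk_sum_ab:
  "(\<Sum>i<Suc M. bka m r i + bkb m r i) = r 0 + (\<Sum>i<M. m i + r (Suc i)) + bka m r M"
proof -
  have "(\<Sum>i<Suc M. bka m r i + bkb m r i) = (\<Sum>i<Suc M. bka m r i) + (\<Sum>i<Suc M. bkb m r i)"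
    by (rule sum.distrib)
  also have "(\<Sum>i<Suc M. bkb m r i) = r 0 + (\<Sum>i<M. min (r (Suc i)) (m i))"
    by (subst sum.lessThan_Suc_shift) (simp add: bkb_def)
  also have "(\<Sum>i<Suc M. bka m r i) = (\<Sum>i<M. max (m i) (r (Suc i))) + bka m r M"
    by (simp add: bka_def)
  also have "(\<Sum>i<M. max (m i) (r (Suc i))) + bka m r M + (r 0 + (\<Sum>i<M. min (r (Suc i)) (m i)))
     = r 0 + ((\<Sum>i<M. max (m i) (r (Suc i))) + (\<Sum>i<M. min (r (Suc i)) (m i))) + bka m r M" by simp
  also have "(\<Sum>i<M. max (m i) (r (Suc i))) + (\<Sum>i<M. min (r (Suc i)) (m i)) = (\<Sum>i<M. m i + r (Suc i))"
    by (subst sum.distrib[symmetric]) (intro sum.cong; auto)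
  finally show ?thesis .
qed

lemma bk_sym:
  fixes x y :: real
  assumes fr: "finite {i. r i \<noteq> 0}"
  shows "(\<Sum>k\<in>Aset m r. x ^ (psize k - psize m) * y ^ (psize r - psize k))
       = (\<Sum>k\<in>Aset m r. y ^ (psize k - psize m) * x ^ (psize r - psize k))"
proof (cases "Aset m r = {}")
  case True
  then show ?thesis by simp
next
  case False
  then obtain k0 where "k0 \<in> Aset m r" by auto
  then have "subpart m k0" "subpart k0 r" using succ_subpart by (auto simp: Aset_def)
  then have mr: "subpart m r" by (rule subpart_trans)
  obtain M where M: "{i. r i \<noteq> 0} \<subseteq> {..<M}" using fin_supp_bound[OF fr] by blast
  have M': "{i. r i \<noteq> 0} \<subseteq> {..<Suc M}" using M by auto
  have rM: "r M = 0" "r (Suc M) = 0" using M by auto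
  have "m M \<le> r M" using mr by (auto simp: subpart_def)
  then have mM: "m M = 0" using rM by simp
  define phi where "phi k = (\<lambda>i. bka m r i + bkb m r i - k i)" for k
  have phiA: "phi k \<in> Aset m r" if "k \<in> Aset m r" for k
  proof -
    have "bka m r i \<le> k i \<and> k i \<le> bkb m r i" for i using that unfolding Aset_iff by auto
    then have "bka m r i \<le> bka m r i + bkb m r i - k i \<and> bka m r i + bkb m r i - k i \<le> bkb m r i" for i
      by (meson nat_refl_aux)
    then show ?thesis unfolding Aset_iff phi_def by auto
  qed
  have phiphi: "phi (phi k) = k" if "k \<in> Aset m r" for k
  proof
    fix i
    have "bka m r i \<le> k i \<and> k i \<le> bkb m r i" using that unfolding Aset_iff by auto
    then show "phi (phi k) i = k i" unfolding phi_def by arith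
  qed
  have bkbr: "bkb m r i \<le> r i" for i by (cases i) (auto simp: bkb_def)
  have subr: "subpart k r" if "k \<in> Aset m r" for k
    using that bkbr unfolding Aset_iff subpart_def by (auto intro: le_trans)
  have sizes: "psize (phi k) + psize k = psize r + psize m" "psize m \<le> psize k" "psize k \<le> psize r"
    if k: "k \<in> Aset m r" for k
  proof -
    have s: "{i. q i \<noteq> 0} \<subseteq> {..<Suc M}" if "subpart q r" for q using supp_mono[OF that] M' by auto
    have "psize (phi k) + psize k = (\<Sum>i<Suc M. phi k i) + (\<Sum>i<Suc M. k i)"
      using psize_eq[OF s[OF subr[OF phiA[OF k]]]] psize_eq[OF s[OF subr[OF k]]] by simp
    also have "\<dots> = (\<Sum>i<Suc M. bka m r i + bkb m r i)"
      unfolding sum.distrib[symmetric]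
    proof (intro sum.cong refl)
      fix i
      have "bka m r i \<le> k i \<and> k i \<le> bkb m r i" using k unfolding Aset_iff by auto
      then show "phi k i + k i = bka m r i + bkb m r i" unfolding phi_def by arith
    qed
    also have "\<dots> = r 0 + (\<Sum>i<M. m i + r (Suc i)) + bka m r M" by (rule bk_sum_ab)
    also have "\<dots> = (\<Sum>i<Suc M. r i) + (\<Sum>i<Suc M. m i)"
    proof -
      have "(\<Sum>i<Suc M. r i) = r 0 + (\<Sum>i<M. r (Suc i))" by (rule sum.lessThan_Suc_shift)
      moreover have "(\<Sum>i<Suc M. m i) = (\<Sum>i<M. m i)" using mM by simp
      moreover have "bka m r M = 0" using rM mM by (simp add: bka_def)
      ultimately show ?thesis by (simp add: sum.distrib)
    qed
    also have "\<dots> = psize r + psize m" using psize_eq[OF M'] psize_eq[OF s[OF mr]] by simp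
    finally show "psize (phi k) + psize k = psize r + psize m" .
    show "psize m \<le> psize k" using k by (intro psize_mono fin_supp_mono[OF subr[OF k] fr])
      (auto simp: Aset_def succ_subpart)
    show "psize k \<le> psize r" by (intro psize_mono[OF subr[OF k] fr])
  qed
  show ?thesis
  proof (rule sum.reindex_bij_witness[of _ phi phi])
    fix k assume k: "k \<in> Aset m r"
    show "phi (phi k) = k" using phiphi[OF k] .
    show "phi k \<in> Aset m r" using phiA[OF k] .
    have "psize (phi k) - psize m = psize r - psize k" "psize r - psize (phi k) = psize k - psize m"
      using sizes[OF k] by auto
    then show "y ^ (psize (phi k) - psize m) * x ^ (psize r - psize (phi k)) =
         x ^ (psize k - psize m) * y ^ (psize r - psize k)" by (simp add: mult.commute)
  qed (use phiphi phiA in auto)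
qed

definition Sub :: "(nat\<Rightarrow>nat) \<Rightarrow> (nat\<Rightarrow>nat) set" where "Sub l = {k. subpart k l}"

lemma two_step:
  assumes fl: "finite {i. l i \<noteq> 0}"
  shows "chainS m l (x # y # xs) = (\<Sum>r\<in>Sub l. (\<Sum>k\<in>Aset m r. x ^ (psize k - psize m) * y ^ (psize r - psize k)) * chainS r l xs)"
proof -
  have fS: "finite (Sub l)" unfolding Sub_def subpart_def by (rule finite_below[OF fl])
  have fK: "finite (Kset m l)" by (rule Kset_finite[OF fl])
  have "chainS m l (x # y # xs) = (\<Sum>k\<in>Kset m l. \<Sum>r\<in>{r. r \<in> Sub l \<and> succ_part r k}. x ^ (psize k - psize m) * (y ^ (psize r - psize k) * chainS r l xs))"
    by (simp add: sum_distrib_left Kset_def Sub_def conj_commute)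
  also have "\<dots> = (\<Sum>r\<in>Sub l. \<Sum>k\<in>{k. k \<in> Kset m l \<and> succ_part r k}. x ^ (psize k - psize m) * (y ^ (psize r - psize k) * chainS r l xs))"
    by (rule sum.swap_restrict[OF fK fS])
  also have "\<dots> = (\<Sum>r\<in>Sub l. (\<Sum>k\<in>Aset m r. x ^ (psize k - psize m) * y ^ (psize r - psize k)) * chainS r l xs)"
  proof (intro sum.cong refl)
    fix r assume "r \<in> Sub l"
    then have "{k. k \<in> Kset m l \<and> succ_part r k} = Aset m r"
      using succ_subpart subpart_trans by (auto simp: Kset_def Aset_def Sub_def) blast
    then show "(\<Sum>k\<in>{k. k \<in> Kset m l \<and> succ_part r k}. x ^ (psize k - psize m) * (y ^ (psize r - psize k) * chainS r l xs)) =
         (\<Sum>k\<in>Aset m r. x ^ (psize k - psize m) * y ^ (psize r - psize k)) * chainS r l xs"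
      by (simp add: sum_distrib_right mult.assoc)
  qed
  finally show ?thesis .
qed

lemma chain_swap:
  assumes fl: "finite {i. l i \<noteq> 0}"
  shows "chainS m l (x # y # xs) = chainS m l (y # x # xs)"
proof -
  have "r \<in> Sub l \<Longrightarrow> finite {i. r i \<noteq> 0}" for r using fin_supp_mono[OF _ fl] by (auto simp: Sub_def)
  then show ?thesis unfolding two_step[OF fl] by (intro sum.cong refl) (simp add: bk_sym)
qed

lemma chain_snoc:
  assumes fl: "finite {i. l i \<noteq> 0}"
  shows "chainS m l (xs @ [x]) = chainS m l (x # xs)"
proof (induction xs arbitrary: m)
  case (Cons a as)
  have "chainS m l ((a # as) @ [x]) = chainS m l (a # x # as)"
    using Cons.IH by simp
  also have "\<dots> = chainS m l (x # a # as)" by (rule chain_swap[OF fl])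
  finally show ?case .
qed simp

lemma chain_rev:
  assumes fl: "finite {i. l i \<noteq> 0}"
  shows "chainS m l (rev xs) = chainS m l xs"
proof (induction xs arbitrary: m)
  case (Cons a as)
  have "chainS m l (rev (a # as)) = chainS m l (a # rev as)"
    by (simp add: chain_snoc[OF fl])
  also have "\<dots> = chainS m l (a # as)" using Cons.IH by simp
  finally show ?case .
qed simp


definition paths :: "(int \<Rightarrow> 's set) \<Rightarrow> int \<Rightarrow> int \<Rightarrow> 's \<Rightarrow> 's \<Rightarrow> (int \<Rightarrow> 's) set" where
  "paths Bf a b x y = {c \<in> Pi\<^sub>E {a..b} Bf. c a = x \<and> c b = y}"

definition PS :: "(int \<Rightarrow> 's set) \<Rightarrow> (int \<Rightarrow> 's \<Rightarrow> 's \<Rightarrow> real) \<Rightarrow> int \<Rightarrow> int \<Rightarrow> 's \<Rightarrow> 's \<Rightarrow> real" where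
  "PS Bf g a b x y = (\<Sum>c\<in>paths Bf a b x y. \<Prod>k\<in>{a..<b}. g k (c k) (c (k + 1)))"

lemma finite_paths: "(\<And>t. finite (Bf t)) \<Longrightarrow> finite (paths Bf a b x y)"
  unfolding paths_def by (rule finite_subset[of _ "Pi\<^sub>E {a..b} Bf"]) (auto intro: finite_PiE)

lemma PS_refl:
  shows "PS Bf g a a x y = (if x = y \<and> x \<in> Bf a then 1 else 0)"
proof -
  let ?c = "\<lambda>t. if t = a then x else undefined"
  have "paths Bf a a x y = (if x = y \<and> x \<in> Bf a then {?c} else {})"
    unfolding paths_def by (auto simp: PiE_def extensional_def)
  then show ?thesis by (auto simp: PS_def)
qed

lemma PS_step:
  shows "PS Bf g a (a + 1) x y = (if x \<in> Bf a \<and> y \<in> Bf (a + 1) then g a x y else 0)"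
proof -
  let ?c = "\<lambda>t. if t = a then x else if t = a + 1 then y else undefined"
  have "{a..a+1} = {a, a+1}" by auto
  then have "paths Bf a (a+1) x y = (if x \<in> Bf a \<and> y \<in> Bf (a + 1) then {?c} else {})"
    unfolding paths_def by (auto simp: PiE_def extensional_def)
  moreover have "{a..<a+1} = {a}" by auto
  ultimately show ?thesis by (simp add: PS_def)
qed

definition join :: "int \<Rightarrow> (int \<Rightarrow> 's) \<Rightarrow> (int \<Rightarrow> 's) \<Rightarrow> (int \<Rightarrow> 's)" where
  "join m c1 c2 = (\<lambda>t. if t \<le> m then c1 t else c2 t)"

lemma PS_concat:
  assumes fin: "\<And>t. finite (Bf t)" and am: "a \<le> m" and mb: "m \<le> b"
  shows "PS Bf g a b x y = (\<Sum>z\<in>Bf m. PS Bf g a m x z * PS Bf g m b z y)"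
proof -
  let ?w = "\<lambda>a b c. \<Prod>k\<in>{a..<b}. g k (c k) (c (k + 1))"
  define Q where "Q z = {c \<in> paths Bf a b x y. c m = z}" for z
  have U: "paths Bf a b x y = (\<Union>z\<in>Bf m. Q z)"
    using am mb by (auto simp: Q_def paths_def PiE_iff)
  have "PS Bf g a b x y = (\<Sum>z\<in>Bf m. \<Sum>c\<in>Q z. ?w a b c)"
    unfolding PS_def U
    by (rule sum.UNION_disjoint) (auto simp: fin Q_def intro: finite_subset[OF _ finite_paths[OF fin]])
  also have "\<dots> = (\<Sum>z\<in>Bf m. PS Bf g a m x z * PS Bf g m b z y)"
  proof (intro sum.cong refl)
    fix z assume z: "z \<in> Bf m"
    let ?P = "paths Bf a m x z \<times> paths Bf m b z y"
    let ?j = "\<lambda>p. join m (fst p) (snd p)"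
    have inj: "inj_on ?j ?P"
    proof (rule inj_onI)
      fix p q assume p: "p \<in> ?P" and q: "q \<in> ?P" and e: "?j p = ?j q"
      have "fst p t = fst q t" for t
      proof (cases "t \<le> m")
        case True then show ?thesis using fun_cong[OF e, of t] by (simp add: join_def)
      next
        case False then show ?thesis using p q by (auto simp: paths_def PiE_def extensional_def)
      qed
      moreover have "snd p t = snd q t" for t
      proof (cases "m < t")
        case True then show ?thesis using fun_cong[OF e, of t] by (simp add: join_def)
      next
        case False
        show ?thesis
        proof (cases "t = m")
          case True then show ?thesis using p q by (auto simp: paths_def)
        next
          case False
          then have "t \<notin> {m..b}" using \<open>\<not> m < t\<close> by auto
          then show ?thesis using p q by (auto simp: paths_def PiE_def extensional_def)
        qed
      qed
      ultimately show "p = q" by (simp add: prod_eq_iff ext)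
    qed
    have img: "?j ` ?P = Q z"
    proof
      show "?j ` ?P \<subseteq> Q z"
      proof clarify
        fix c1 c2 assume c1: "c1 \<in> paths Bf a m x z" and c2: "c2 \<in> paths Bf m b z y"
        have "join m c1 c2 \<in> Pi\<^sub>E {a..b} Bf"
        proof (rule PiE_I)
          fix t assume "t \<in> {a..b}"
          then show "join m c1 c2 t \<in> Bf t" using c1 c2 by (auto simp: join_def paths_def)
        next
          fix t assume "t \<notin> {a..b}"
          then show "join m c1 c2 t = undefined" using c1 c2 am mb
            by (auto simp: join_def paths_def PiE_def extensional_def)
        qed
        moreover have "join m c1 c2 a = x" using c1 am by (auto simp: join_def paths_def)
        moreover have "join m c1 c2 b = y" using c1 c2 mb by (auto simp: join_def paths_def)
        moreover have "join m c1 c2 m = z" using c1 by (auto simp: join_def paths_def)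
        ultimately show "join m (fst (c1, c2)) (snd (c1, c2)) \<in> Q z" by (auto simp: Q_def paths_def)
      qed
    next
      show "Q z \<subseteq> ?j ` ?P"
      proof
        fix c assume c: "c \<in> Q z"
        let ?c1 = "\<lambda>t. if t \<in> {a..m} then c t else undefined"
        let ?c2 = "\<lambda>t. if t \<in> {m..b} then c t else undefined"
        have "?c1 \<in> paths Bf a m x z" "?c2 \<in> paths Bf m b z y"
          using c am mb by (auto simp: Q_def paths_def)
        moreover have "join m ?c1 ?c2 = c"
        proof
          fix t show "join m ?c1 ?c2 t = c t"
            using c am mb by (auto simp: join_def Q_def paths_def PiE_def extensional_def)
        qed
        ultimately show "c \<in> ?j ` ?P" by (intro image_eqI[where x="(?c1, ?c2)"]) auto
      qed
    qed
    have wsplit: "?w a b (join m c1 c2) = ?w a m c1 * ?w m b c2" if "(c1, c2) \<in> ?P" for c1 c2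
    proof -
      have "{a..<b} = {a..<m} \<union> {m..<b}" using am mb by auto
      then have "?w a b (join m c1 c2) = ?w a m (join m c1 c2) * ?w m b (join m c1 c2)"
        by (simp add: prod.union_disjoint ivl_disj_int_two(3))
      moreover have "?w a m (join m c1 c2) = ?w a m c1"
        by (intro prod.cong refl) (auto simp: join_def)
      moreover have "?w m b (join m c1 c2) = ?w m b c2"
        using that by (intro prod.cong refl) (auto simp: join_def paths_def)
      ultimately show ?thesis by simp
    qed
    have "(\<Sum>c\<in>Q z. ?w a b c) = (\<Sum>p\<in>?P. ?w a b (?j p))"
      unfolding img[symmetric] by (rule sum.reindex[OF inj, unfolded comp_def])
    also have "\<dots> = (\<Sum>p\<in>?P. ?w a m (fst p) * ?w m b (snd p))"
      by (intro sum.cong refl) (use wsplit in auto)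
    also have "\<dots> = PS Bf g a m x z * PS Bf g m b z y"
      unfolding PS_def sum_product sum.cartesian_product by (simp add: split_def)
    finally show "(\<Sum>c\<in>Q z. ?w a b c) = PS Bf g a m x z * PS Bf g m b z y" .
  qed
  finally show ?thesis .
qed


definition Bset :: "(nat\<Rightarrow>nat) \<Rightarrow> (nat\<Rightarrow>nat) set" where
  "Bset L = {k \<in> partitions. subpart k L}"

lemma pow_ratio_inv: "(z::real) \<noteq> 0 \<Longrightarrow> p \<le> q \<Longrightarrow> z ^ p / z ^ q = inverse z ^ (q - p)"
  by (simp add: power_diff power_inverse)

lemma pow_ratio: "(z::real) \<noteq> 0 \<Longrightarrow> q \<le> p \<Longrightarrow> z ^ p / z ^ q = z ^ (p - q)"
  by (simp add: power_diff)

lemma PS_grow: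
  assumes fin: "\<And>t. finite (Bf t)"
    and g: "\<And>k x y. k \<in> {a..<a + int n} \<Longrightarrow> g k x y = (if succ_part y x then xp k ^ psize x / xp k ^ psize y else 0)"
    and xp: "\<And>k. k \<in> {a..<a + int n} \<Longrightarrow> xp k \<noteq> 0"
    and inter: "\<And>t. a < t \<Longrightarrow> t < a + int n \<Longrightarrow> Bf t = Bset L"
    and x: "x \<in> Bf a" and y: "y \<in> Bf (a + int n)" and yp: "y \<in> partitions" and yL: "subpart y L"
  shows "PS Bf g a (a + int n) x y = chainS x y (map (\<lambda>k. inverse (xp k)) [a..a + int n - 1])"
  using g xp inter x y
proof (induction n arbitrary: a x)
  case 0
  then show ?case by (simp add: PS_refl)
next
  case (Suc n)
  have fy: "finite {i. y i \<noteq> 0}" using yp by (auto simp: partitions_def)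
  have e: "a + int (Suc n) = (a + 1) + int n" by simp
  let ?xs = "map (\<lambda>k. inverse (xp k)) [a + 1..a + int (Suc n) - 1]"
  have y': "y \<in> Bf ((a + 1) + int n)" using Suc.prems(5) unfolding e .
  have IH: "PS Bf g (a + 1) (a + int (Suc n)) z y = chainS z y ?xs" if z: "z \<in> Bf (a + 1)" for z
    unfolding e
  proof (rule Suc.IH)
    show "y \<in> Bf (a + 1 + int n)" by (rule y')
  qed (use Suc.prems z in auto)
  have lst: "map (\<lambda>k. inverse (xp k)) [a..a + int (Suc n) - 1] = inverse (xp a) # ?xs"
    by (simp add: upto_rec1)
  have xpa: "xp a \<noteq> 0" using Suc.prems(2)[of a] by simp
  have ga: "g a x z = (if succ_part z x then xp a ^ psize x / xp a ^ psize z else 0)" for z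
    using Suc.prems(1)[of a] by simp
  have "PS Bf g a (a + int (Suc n)) x y = (\<Sum>z\<in>Bf (a + 1). PS Bf g a (a + 1) x z * PS Bf g (a + 1) (a + int (Suc n)) z y)"
    by (rule PS_concat[OF fin]) auto
  also have "\<dots> = (\<Sum>z\<in>Bf (a + 1). g a x z * chainS z y ?xs)"
  proof (intro sum.cong refl)
    fix z assume z: "z \<in> Bf (a + 1)"
    have "PS Bf g a (a+1) x z = g a x z" using PS_step[of Bf g a x z] z Suc.prems(4) by simp
    then show "PS Bf g a (a + 1) x z * PS Bf g (a + 1) (a + int (Suc n)) z y = g a x z * chainS z y ?xs"
      using IH[OF z] by simp
  qed
  also have "\<dots> = (\<Sum>z\<in>Bf (a + 1) \<inter> Kset x y. inverse (xp a) ^ (psize z - psize x) * chainS z y ?xs)"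
  proof (rule sum.mono_neutral_cong_right)
    show "finite (Bf (a + 1))" by (rule fin)
    show "Bf (a + 1) \<inter> Kset x y \<subseteq> Bf (a + 1)" by auto
    show "\<forall>z\<in>Bf (a + 1) - Bf (a + 1) \<inter> Kset x y. g a x z * chainS z y ?xs = 0"
    proof
      fix z assume z: "z \<in> Bf (a + 1) - Bf (a + 1) \<inter> Kset x y"
      then have that: "z \<in> Bf (a + 1) - Bf (a + 1) \<inter> Kset x y" .
      show "g a x z * chainS z y ?xs = 0"
        using that chainS_nz[of z y ?xs] by (auto simp: Kset_def ga)
    qed
    show "g a x z * chainS z y ?xs = inverse (xp a) ^ (psize z - psize x) * chainS z y ?xs"
      if "z \<in> Bf (a + 1) \<inter> Kset x y" for z
    proof -
      have "subpart x z" "subpart z y" using that Kset_sub by auto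
      then have "psize x \<le> psize z" using psize_mono fin_supp_mono[OF _ fy] by blast
      then show ?thesis using that xpa by (simp add: ga Kset_def pow_ratio_inv)
    qed
  qed
  also have "\<dots> = (\<Sum>z\<in>Kset x y. inverse (xp a) ^ (psize z - psize x) * chainS z y ?xs)"
  proof (rule sum.mono_neutral_left)
    show "finite (Kset x y)" by (rule Kset_finite[OF fy])
    show "Bf (a + 1) \<inter> Kset x y \<subseteq> Kset x y" by auto
    show "\<forall>z\<in>Kset x y - Bf (a + 1) \<inter> Kset x y. inverse (xp a) ^ (psize z - psize x) * chainS z y ?xs = 0"
    proof
      fix z assume z: "z \<in> Kset x y - Bf (a + 1) \<inter> Kset x y"
      then have that: "z \<in> Kset x y - Bf (a + 1) \<inter> Kset x y" .
      show "inverse (xp a) ^ (psize z - psize x) * chainS z y ?xs = 0"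
    proof (cases n)
      case 0
      then have "?xs = []" by simp
      moreover have "z \<noteq> y" using z Suc.prems(5) 0 by auto
      ultimately show ?thesis by simp
    next
      case (Suc n')
      then have "Bf (a + 1) = Bset L" using Suc.prems(3)[of "a+1"] by simp
      moreover have "z \<in> Bset L" using z succ_partition[OF _ _ fy] subpart_trans[OF _ yL]
        by (auto simp: Bset_def Kset_def)
      ultimately show ?thesis using z by simp
    qed
    qed
  qed
  also have "\<dots> = chainS x y (map (\<lambda>k. inverse (xp k)) [a..a + int (Suc n) - 1])"
    unfolding lst by simp
  finally show ?case .
qed

lemma PS_shrink:
  assumes fin: "\<And>t. finite (Bf t)"
    and g: "\<And>k x y. k \<in> {a..<a + int n} \<Longrightarrow> g k x y = (if succ_part x y then xp k ^ psize x / xp k ^ psize y else 0)"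
    and xp: "\<And>k. k \<in> {a..<a + int n} \<Longrightarrow> xp k \<noteq> 0"
    and inter: "\<And>t. a < t \<Longrightarrow> t < a + int n \<Longrightarrow> Bf t = Bset L"
    and x: "x \<in> Bf a" and xpp: "x \<in> partitions" and xL: "subpart x L" and y: "y \<in> Bf (a + int n)"
  shows "PS Bf g a (a + int n) x y = chainS y x (rev (map xp [a..a + int n - 1]))"
  using g xp inter y
proof (induction n arbitrary: y)
  case 0
  then show ?case using x by (auto simp: PS_refl)
next
  case (Suc n)
  have fx: "finite {i. x i \<noteq> 0}" using xpp by (auto simp: partitions_def)
  let ?xs = "rev (map xp [a..a + int n - 1])"
  have IH: "PS Bf g a (a + int n) x z = chainS z x ?xs" if z: "z \<in> Bf (a + int n)" for z
    by (rule Suc.IH) (use Suc.prems z in auto)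
  have lst: "rev (map xp [a..a + int (Suc n) - 1]) = xp (a + int n) # ?xs"
    by (simp add: upto_rec2)
  have xpa: "xp (a + int n) \<noteq> 0" using Suc.prems(2)[of "a + int n"] by simp
  have ga: "g (a + int n) z y = (if succ_part z y then xp (a + int n) ^ psize z / xp (a + int n) ^ psize y else 0)" for z
    using Suc.prems(1)[of "a + int n"] by simp
  have e: "a + int (Suc n) = a + int n + 1" by simp
  have y': "y \<in> Bf (a + int n + 1)" using Suc.prems(4) unfolding e .
  have st: "PS Bf g (a + int n) (a + int n + 1) z y = g (a + int n) z y" if "z \<in> Bf (a + int n)" for z
    using PS_step[of Bf g "a + int n" z y] that y' by simp
  have "PS Bf g a (a + int (Suc n)) x y = (\<Sum>z\<in>Bf (a + int n). PS Bf g a (a + int n) x z * PS Bf g (a + int n) (a + int (Suc n)) z y)"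
    by (rule PS_concat[OF fin]) auto
  also have "\<dots> = (\<Sum>z\<in>Bf (a + int n). chainS z x ?xs * g (a + int n) z y)"
  proof (intro sum.cong refl)
    fix z assume z: "z \<in> Bf (a + int n)"
    show "PS Bf g a (a + int n) x z * PS Bf g (a + int n) (a + int (Suc n)) z y = chainS z x ?xs * g (a + int n) z y"
      unfolding e st[OF z] IH[OF z] ..
  qed
  also have "\<dots> = (\<Sum>z\<in>Bf (a + int n) \<inter> Kset y x. xp (a + int n) ^ (psize z - psize y) * chainS z x ?xs)"
  proof (rule sum.mono_neutral_cong_right)
    show "finite (Bf (a + int n))" by (rule fin)
    show "Bf (a + int n) \<inter> Kset y x \<subseteq> Bf (a + int n)" by auto
    show "\<forall>z\<in>Bf (a + int n) - Bf (a + int n) \<inter> Kset y x. chainS z x ?xs * g (a + int n) z y = 0"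
    proof
      fix z assume z: "z \<in> Bf (a + int n) - Bf (a + int n) \<inter> Kset y x"
      then have that: "z \<in> Bf (a + int n) - Bf (a + int n) \<inter> Kset y x" .
      show "chainS z x ?xs * g (a + int n) z y = 0"
        using that chainS_nz[of z x ?xs] by (auto simp: Kset_def ga)
    qed
    show "chainS z x ?xs * g (a + int n) z y = xp (a + int n) ^ (psize z - psize y) * chainS z x ?xs"
      if "z \<in> Bf (a + int n) \<inter> Kset y x" for z
    proof -
      have "subpart y z" "subpart z x" using that Kset_sub by auto
      then have "psize y \<le> psize z" using psize_mono fin_supp_mono[OF _ fx] by blast
      then show ?thesis using that xpa by (simp add: ga Kset_def pow_ratio)
    qed
  qed
  also have "\<dots> = (\<Sum>z\<in>Kset y x. xp (a + int n) ^ (psize z - psize y) * chainS z x ?xs)"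
  proof (rule sum.mono_neutral_left)
    show "finite (Kset y x)" by (rule Kset_finite[OF fx])
    show "Bf (a + int n) \<inter> Kset y x \<subseteq> Kset y x" by auto
    show "\<forall>z\<in>Kset y x - Bf (a + int n) \<inter> Kset y x. xp (a + int n) ^ (psize z - psize y) * chainS z x ?xs = 0"
    proof
      fix z assume z: "z \<in> Kset y x - Bf (a + int n) \<inter> Kset y x"
      then have that: "z \<in> Kset y x - Bf (a + int n) \<inter> Kset y x" .
      show "xp (a + int n) ^ (psize z - psize y) * chainS z x ?xs = 0"
    proof (cases n)
      case 0
      then have "?xs = []" by simp
      moreover have "z \<noteq> x" using z x 0 by auto
      ultimately show ?thesis by simp
    next
      case (Suc n')
      then have "Bf (a + int n) = Bset L" using Suc.prems(3)[of "a + int n"] by simp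
      moreover have "z \<in> Bset L" using z succ_partition[OF _ _ fx] subpart_trans[OF _ xL]
        by (auto simp: Bset_def Kset_def)
      ultimately show ?thesis using z by simp
    qed
    qed
  qed
  also have "\<dots> = chainS y x (rev (map xp [a..a + int (Suc n) - 1]))"
    unfolding lst by simp
  finally show ?case .
qed


locale SP =
  fixes N :: nat and u v :: "nat \<Rightarrow> int" and q :: "int \<Rightarrow> real" and lam :: "nat \<Rightarrow> nat \<Rightarrow> nat"
  assumes N1: "N \<ge> 1"
    and ord: "\<And>i. 1 \<le> i \<Longrightarrow> i \<le> N \<Longrightarrow> u (i - 1) < v i \<and> v i < u i"
    and qpos: "\<And>t. u 0 < t \<Longrightarrow> t < u N \<Longrightarrow> 0 < q t \<and> q t < 1"
    and lamp: "\<And>i. 1 \<le> i \<Longrightarrow> i \<le> N \<Longrightarrow> lam i \<in> partitions"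
begin

lemma u_step: "1 \<le> i \<Longrightarrow> i \<le> N \<Longrightarrow> u (i - 1) < u i"
  using ord[of i] by auto

lemma u_mono_lt: "j < i \<Longrightarrow> i \<le> N \<Longrightarrow> u j < u i"
proof (induction i)
  case (Suc i)
  have "u i < u (Suc i)" using u_step[of "Suc i"] Suc.prems by simp
  then show ?case using Suc by (cases "j = i") auto
qed simp

lemma u_mono_le: "j \<le> i \<Longrightarrow> i \<le> N \<Longrightarrow> u j \<le> u i"
  using u_mono_lt[of j i] by (cases "j = i") auto

lemma v_lt_u: "1 \<le> j \<Longrightarrow> j \<le> i \<Longrightarrow> i \<le> N \<Longrightarrow> v j < u i"
  using ord[of j] u_mono_le[of j i] by auto

lemma u_lt_v: "i < j \<Longrightarrow> j \<le> N \<Longrightarrow> u i < v j"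
proof -
  assume a: "i < j" "j \<le> N"
  then have "u i \<le> u (j - 1)" using u_mono_le[of i "j - 1"] by auto
  then show ?thesis using ord[of j] a by auto
qed

lemma v_mono_lt: "1 \<le> j \<Longrightarrow> j < i \<Longrightarrow> i \<le> N \<Longrightarrow> v j < v i"
  using v_lt_u[of j j] u_lt_v[of j i] by auto

lemma v_inj: "1 \<le> i \<Longrightarrow> i \<le> N \<Longrightarrow> 1 \<le> j \<Longrightarrow> j \<le> N \<Longrightarrow> v i = v j \<Longrightarrow> i = j"
  using v_mono_lt[of i j] v_mono_lt[of j i] by (cases "i < j"; cases "j < i") auto

lemma u0_lt_uN: "u 0 < u N"
  using u_mono_lt[of 0 N] N1 by auto

lemma find_seg:
  assumes "u 0 \<le> t" "t < u N"
  shows "\<exists>i\<in>{1..N}. u (i - 1) \<le> t \<and> t < u i"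
proof -
  define i where "i = (LEAST i. t < u i)"
  have i1: "t < u i" unfolding i_def by (rule LeastI[of _ N]) (use assms in auto)
  have i2: "i \<le> N" unfolding i_def by (rule Least_le) (use assms in auto)
  have "i \<noteq> 0"
  proof
    assume "i = 0" then show False using i1 assms by simp
  qed
  moreover have "\<not> t < u (i - 1)" using not_less_Least[of "i - 1" "\<lambda>i. t < u i"] \<open>i \<noteq> 0\<close>
    unfolding i_def by auto
  ultimately show ?thesis using i1 i2 by (intro bexI[of _ i]) auto
qed

lemma Dminus_in: "i \<in> {1..N} \<Longrightarrow> u (i - 1) \<le> k \<Longrightarrow> k < v i \<Longrightarrow> in_Dminus N u v k"
  unfolding in_Dminus_def by (intro bexI[of _ i]) auto

lemma Dminus_out:
  assumes i: "i \<in> {1..N}" and k: "v i \<le> k" "k < u i"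
  shows "\<not> in_Dminus N u v k"
proof
  assume "in_Dminus N u v k"
  then obtain j where j: "j \<in> {1..N}" "u (j - 1) \<le> k" "k + 1 \<le> v j" unfolding in_Dminus_def by auto
  consider "j \<le> i" | "i < j" by linarith
  then show False
  proof cases
    case 1
    then have "v j \<le> v i" using v_mono_lt[of j i] i j by (cases "j = i") auto
    then show False using j k by auto
  next
    case 2
    then have "u i \<le> u (j - 1)" using u_mono_le[of i "j - 1"] j by auto
    then show False using j k by auto
  qed
qed

lemma Dplus_in: "i \<in> {1..N} \<Longrightarrow> v i \<le> k \<Longrightarrow> k < u i \<Longrightarrow> in_Dplus N u v k"
  unfolding in_Dplus_def by (intro bexI[of _ i]) auto

lemma Dplus_not_Dminus: "in_Dplus N u v k \<Longrightarrow> \<not> in_Dminus N u v k"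
  unfolding in_Dplus_def using Dminus_out by auto

lemma D_cover: "u 0 \<le> k \<Longrightarrow> k < u N \<Longrightarrow> in_Dminus N u v k \<or> in_Dplus N u v k"
proof -
  assume "u 0 \<le> k" "k < u N"
  then obtain i where i: "i \<in> {1..N}" "u (i - 1) \<le> k" "k < u i" using find_seg by blast
  show ?thesis
  proof (cases "k < v i")
    case True then show ?thesis using Dminus_in[OF i(1,2)] by auto
  next
    case False then show ?thesis using Dplus_in[OF i(1) _ i(3)] by auto
  qed
qed

definition Lam :: "nat \<Rightarrow> nat" where "Lam j = (\<Sum>i\<in>{1..N}. lam i j)"

definition Bf :: "int \<Rightarrow> (nat \<Rightarrow> nat) set" where
  "Bf t = {k \<in> Bset Lam. \<forall>i\<in>{1..N}. t = v i \<longrightarrow> k = lam i}"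

definition xp :: "int \<Rightarrow> real" where "xp = xplus u q"

definition g :: "int \<Rightarrow> (nat\<Rightarrow>nat) \<Rightarrow> (nat\<Rightarrow>nat) \<Rightarrow> real" where
  "g k x y = (if in_Dminus N u v k then (if succ_part y x then xp k ^ psize x / xp k ^ psize y else 0)
               else (if succ_part x y then xp k ^ psize x / xp k ^ psize y else 0))"

lemma finite_Lam: "finite {j. Lam j \<noteq> 0}"
proof -
  have "{j. Lam j \<noteq> 0} \<subseteq> (\<Union>i\<in>{1..N}. {j. lam i j \<noteq> 0})" by (auto simp: Lam_def)
  moreover have "finite (\<Union>i\<in>{1..N}. {j. lam i j \<noteq> 0})" using lamp by (auto simp: partitions_def)
  ultimately show ?thesis by (rule finite_subset)
qed

lemma lam_Lam: "i \<in> {1..N} \<Longrightarrow> subpart (lam i) Lam"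
  unfolding subpart_def Lam_def by (auto intro!: member_le_sum)

lemma finite_Bset: "finite (Bset Lam)"
  by (rule finite_subset[OF _ finite_below[OF finite_Lam]]) (auto simp: Bset_def subpart_def)

lemma finite_Bf: "finite (Bf t)"
  by (rule finite_subset[OF _ finite_Bset]) (auto simp: Bf_def)

lemma Bf_free: "(\<And>i. i \<in> {1..N} \<Longrightarrow> t \<noteq> v i) \<Longrightarrow> Bf t = Bset Lam"
  by (auto simp: Bf_def)

lemma Bf_v: "i \<in> {1..N} \<Longrightarrow> Bf (v i) = {lam i}"
proof -
  assume i: "i \<in> {1..N}"
  have "\<And>j. j \<in> {1..N} \<Longrightarrow> v i = v j \<Longrightarrow> lam i = lam j" using v_inj i by auto
  moreover have "lam i \<in> Bset Lam" using i lam_Lam lamp by (auto simp: Bset_def)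
  ultimately have "lam i \<in> Bf (v i)" unfolding Bf_def by blast
  moreover have "k = lam i" if "k \<in> Bf (v i)" for k using that i unfolding Bf_def by blast
  ultimately show ?thesis by blast
qed

lemma Bf_u: "j \<le> N \<Longrightarrow> Bf (u j) = Bset Lam"
proof -
  assume j: "j \<le> N"
  have "u j \<noteq> v i" if "i \<in> {1..N}" for i
  proof (cases "i \<le> j")
    case True then show ?thesis using v_lt_u[of i j] that j by auto
  next
    case False then show ?thesis using u_lt_v[of j i] that by auto
  qed
  then show ?thesis by (intro Bf_free) auto
qed

lemma empty_part_B: "empty_part \<in> Bset Lam"
  by (auto simp: Bset_def partitions_def empty_part_def subpart_def)

lemma xp_pos: "k < u N \<Longrightarrow> xp k > 0"
  unfolding xp_def xplus_def using qpos by (intro prod_pos) auto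

end


context SP begin

lemma lam_fin: "i \<in> {1..N} \<Longrightarrow> finite {j. lam i j \<noteq> 0}"
  using lamp by (auto simp: partitions_def)

lemma seg_grow:
  assumes i: "i \<in> {1..N}" and x: "x \<in> Bf (u (i - 1))"
  shows "PS Bf g (u (i - 1)) (v i) x (lam i) = chainS x (lam i) (Xminus u v q i)"
proof -
  define a where "a = u (i - 1)"
  define n where "n = nat (v i - a)"
  have an: "a + int n = v i" using ord[of i] i by (auto simp: a_def n_def)
  have viN: "v i < u N" using v_lt_u[of i N] i by auto
  have "PS Bf g a (a + int n) x (lam i) = chainS x (lam i) (map (\<lambda>k. inverse (xp k)) [a..a + int n - 1])"
  proof (rule PS_grow[where L = Lam])
    show "finite (Bf t)" for t by (rule finite_Bf)
    show "g k x y = (if succ_part y x then xp k ^ psize x / xp k ^ psize y else 0)" if "k \<in> {a..<a + int n}" for k x y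
      using that Dminus_in[OF i, of k] an by (auto simp: g_def a_def)
    show "xp k \<noteq> 0" if "k \<in> {a..<a + int n}" for k using that xp_pos[of k] an viN by auto
    show "Bf t = Bset Lam" if "a < t" "t < a + int n" for t
    proof (rule Bf_free)
      fix j assume j: "j \<in> {1..N}"
      show "t \<noteq> v j"
      proof (cases "j < i")
        case True
        then have "v j < u (i - 1)" using v_lt_u[of j "i - 1"] j i by auto
        then show ?thesis using that by (auto simp: a_def)
      next
        case False
        then have "v i \<le> v j" using v_mono_lt[of i j] i j by (cases "i = j") auto
        then show ?thesis using that an by auto
      qed
    qed
    show "x \<in> Bf a" using x by (simp add: a_def)
    show "lam i \<in> Bf (a + int n)" using Bf_v[OF i] an by simp
    show "lam i \<in> partitions" using lamp i by auto
    show "subpart (lam i) Lam" using lam_Lam[OF i] .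
  qed
  moreover have "map (\<lambda>k. inverse (xp k)) [a..a + int n - 1] = Xminus u v q i"
    unfolding an by (simp add: Xminus_def xminus_def xp_def a_def)
  ultimately show ?thesis using an by (simp add: a_def)
qed

lemma seg_shrink:
  assumes i: "i \<in> {1..N}" and y: "y \<in> Bf (u i)"
  shows "PS Bf g (v i) (u i) (lam i) y = chainS y (lam i) (Xplus u v q i)"
proof -
  define a where "a = v i"
  define n where "n = nat (u i - a)"
  have an: "a + int n = u i" using ord[of i] i by (auto simp: a_def n_def)
  have uiN: "u i \<le> u N" using u_mono_le[of i N] i by auto
  have "PS Bf g a (a + int n) (lam i) y = chainS y (lam i) (rev (map xp [a..a + int n - 1]))"
  proof (rule PS_shrink[where L = Lam])
    show "finite (Bf t)" for t by (rule finite_Bf)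
    show "g k x y = (if succ_part x y then xp k ^ psize x / xp k ^ psize y else 0)" if "k \<in> {a..<a + int n}" for k x y
      using that Dminus_out[OF i, of k] an by (auto simp: g_def a_def)
    show "xp k \<noteq> 0" if "k \<in> {a..<a + int n}" for k using that xp_pos[of k] an uiN by auto
    show "Bf t = Bset Lam" if "a < t" "t < a + int n" for t
    proof (rule Bf_free)
      fix j assume j: "j \<in> {1..N}"
      show "t \<noteq> v j"
      proof (cases "j \<le> i")
        case True
        then have "v j \<le> v i" using v_mono_lt[of j i] j i by (cases "i = j") auto
        then show ?thesis using that by (auto simp: a_def)
      next
        case False
        then have "u i < v j" using u_lt_v[of i j] j by auto
        then show ?thesis using that an by auto
      qed
    qed
    show "lam i \<in> Bf a" using Bf_v[OF i] by (simp add: a_def)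
    show "lam i \<in> partitions" using lamp i by auto
    show "subpart (lam i) Lam" using lam_Lam[OF i] .
    show "y \<in> Bf (a + int n)" using y an by simp
  qed
  moreover have "chainS y (lam i) (rev (map xp [a..a + int n - 1])) = chainS y (lam i) (Xplus u v q i)"
    unfolding an by (simp add: chain_rev[OF lam_fin[OF i]] Xplus_def xp_def a_def)
  ultimately show ?thesis using an by (simp add: a_def)
qed

definition C :: "nat \<Rightarrow> real" where
  "C i = (\<Sum>z\<in>Bset Lam. chainS z (lam i) (Xplus u v q i) * chainS z (lam (i + 1)) (Xminus u v q (i + 1)))"

definition G :: "nat \<Rightarrow> real" where
  "G j = chainS empty_part (lam 1) (Xminus u v q 1) * (\<Prod>i\<in>{1..<j}. C i)"

lemma main_ind:
  "Suc j \<le> N \<Longrightarrow> y \<in> Bf (u (Suc j)) \<Longrightarrow>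
    PS Bf g (u 0) (u (Suc j)) empty_part y = G (Suc j) * chainS y (lam (Suc j)) (Xplus u v q (Suc j))"
proof (induction j arbitrary: y)
  case 0
  have i1: "(1::nat) \<in> {1..N}" using N1 by auto
  have "PS Bf g (u 0) (u 1) empty_part y = (\<Sum>z\<in>Bf (v 1). PS Bf g (u 0) (v 1) empty_part z * PS Bf g (v 1) (u 1) z y)"
    by (rule PS_concat[OF finite_Bf]) (use ord[of 1] N1 in auto)
  also have "\<dots> = PS Bf g (u 0) (v 1) empty_part (lam 1) * PS Bf g (v 1) (u 1) (lam 1) y"
    using Bf_v[OF i1] by simp
  also have "\<dots> = chainS empty_part (lam 1) (Xminus u v q 1) * chainS y (lam 1) (Xplus u v q 1)"
    using seg_grow[OF i1, of empty_part] seg_shrink[OF i1, of y] 0 Bf_u[of 0] empty_part_B by simp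
  finally show ?case by (simp add: G_def)
next
  case (Suc j)
  let ?j1 = "Suc j" and ?j2 = "Suc (Suc j)"
  have i2: "?j2 \<in> {1..N}" using Suc.prems by auto
  have Bu: "Bf (u ?j1) = Bset Lam" using Bf_u[of ?j1] Suc.prems by auto
  have inner: "PS Bf g (u ?j1) (u ?j2) z y = chainS z (lam ?j2) (Xminus u v q ?j2) * chainS y (lam ?j2) (Xplus u v q ?j2)"
    if z: "z \<in> Bset Lam" for z
  proof -
    have "PS Bf g (u ?j1) (u ?j2) z y = (\<Sum>w\<in>Bf (v ?j2). PS Bf g (u ?j1) (v ?j2) z w * PS Bf g (v ?j2) (u ?j2) w y)"
      by (rule PS_concat[OF finite_Bf]) (use ord[of ?j2] Suc.prems in auto)
    also have "\<dots> = PS Bf g (u ?j1) (v ?j2) z (lam ?j2) * PS Bf g (v ?j2) (u ?j2) (lam ?j2) y"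
      using Bf_v[OF i2] by simp
    also have "\<dots> = chainS z (lam ?j2) (Xminus u v q ?j2) * chainS y (lam ?j2) (Xplus u v q ?j2)"
      using seg_grow[OF i2, of z] seg_shrink[OF i2, of y] Suc.prems z Bu by simp
    finally show ?thesis .
  qed
  have "PS Bf g (u 0) (u ?j2) empty_part y = (\<Sum>z\<in>Bf (u ?j1). PS Bf g (u 0) (u ?j1) empty_part z * PS Bf g (u ?j1) (u ?j2) z y)"
    by (rule PS_concat[OF finite_Bf]) (use u_mono_le[of 0 ?j1] u_mono_le[of ?j1 ?j2] Suc.prems in auto)
  also have "\<dots> = (\<Sum>z\<in>Bset Lam. G ?j1 * chainS z (lam ?j1) (Xplus u v q ?j1) *
        (chainS z (lam ?j2) (Xminus u v q ?j2) * chainS y (lam ?j2) (Xplus u v q ?j2)))"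
    unfolding Bu using Suc.IH[of z for z] Suc.prems Bu inner by (intro sum.cong refl) auto
  also have "\<dots> = G ?j1 * C ?j1 * chainS y (lam ?j2) (Xplus u v q ?j2)"
    by (simp add: C_def sum_distrib_left sum_distrib_right mult.assoc mult.left_commute)
  also have "G ?j1 * C ?j1 = G ?j2"
  proof -
    have "{1..<?j2} = insert ?j1 {1..<?j1}" by auto
    then show ?thesis by (simp add: G_def mult.assoc mult.commute mult.left_commute)
  qed
  finally show ?case .
qed

lemma PS_total: "PS Bf g (u 0) (u N) empty_part empty_part = G N * chainS empty_part (lam N) (Xplus u v q N)"
proof -
  have "N = Suc (N - 1)" using N1 by auto
  then show ?thesis using main_ind[of "N - 1" empty_part] Bf_u[of N] empty_part_B by simp
qed

end


context SP begin

lemma psize_empty[simp]: "psize empty_part = 0"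
  by (simp add: psize_def empty_part_def)

lemma tele:
  fixes f :: "int \<Rightarrow> nat"
  assumes f0: "f (u 0) = 0"
  shows "u 0 + 1 + int n \<le> u N \<Longrightarrow>
    (\<Prod>k\<in>{u 0..<u 0 + 1 + int n}. xp k ^ f k / xp k ^ f (k + 1))
      = (\<Prod>t\<in>{u 0<..<u 0 + 1 + int n}. q t ^ f t) / xp (u 0 + int n) ^ f (u 0 + 1 + int n)"
proof (induction n)
  case 0
  have "{u 0..<u 0 + 1} = {u 0}" "{u 0<..<u 0 + 1} = {}" by auto
  then show ?case using f0 by simp
next
  case (Suc n)
  define b where "b = u 0 + 1 + int n"
  have b1: "u 0 + 1 + int (Suc n) = b + 1" "u 0 + int (Suc n) = b" by (auto simp: b_def)
  have bN: "b < u N" using Suc.prems b1 by auto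
  have I1: "{u 0..<b + 1} = insert b {u 0..<b}" "{u 0<..<b + 1} = insert b {u 0<..<b}" by (auto simp: b_def)
  have xpb: "xp b = q b * xp (u 0 + int n)"
  proof -
    have "{u 0<..b} = insert b {u 0<..u 0 + int n}" by (auto simp: b_def)
    then show ?thesis by (simp add: xp_def xplus_def b_def)
  qed
  have "u 0 + int n < u N" using bN by (simp add: b_def)
  then have nz: "xp (u 0 + int n) \<noteq> 0" "xp b \<noteq> 0" using xp_pos[of "u 0 + int n"] xp_pos[of b] bN by auto
  have qb: "q b \<noteq> 0" using qpos[of b] bN by (auto simp: b_def)
  have IH: "(\<Prod>k\<in>{u 0..<b}. xp k ^ f k / xp k ^ f (k + 1))
      = (\<Prod>t\<in>{u 0<..<b}. q t ^ f t) / xp (u 0 + int n) ^ f b"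
    using Suc.IH Suc.prems by (simp add: b_def)
  show ?case unfolding b1 I1
    using nz qb by (simp add: IH b_def[symmetric] xpb power_mult_distrib field_simps)
qed

lemma weight_tele:
  assumes "psize (L (u 0)) = 0" "psize (L (u N)) = 0"
  shows "weight N u q L = (\<Prod>k\<in>{u 0..<u N}. xp k ^ psize (L k) / xp k ^ psize (L (k + 1)))"
proof -
  define n where "n = nat (u N - u 0 - 1)"
  have e: "u 0 + 1 + int n = u N" using u0_lt_uN by (auto simp: n_def)
  show ?thesis
    using tele[of "\<lambda>t. psize (L t)" n] assms unfolding e by (simp add: weight_def)
qed

definition E :: "(int \<Rightarrow> nat \<Rightarrow> nat) set" where
  "E = {L \<in> configs N u v. \<forall>i\<in>{1..N}. L (v i) = lam i}"

lemma configsD: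
  assumes "L \<in> configs N u v"
  shows "\<And>t. L t \<in> partitions" "\<And>t. t \<le> u 0 \<or> u N \<le> t \<Longrightarrow> L t = empty_part"
    "\<And>k. u 0 \<le> k \<Longrightarrow> k + 1 \<le> u N \<Longrightarrow> in_Dminus N u v k \<Longrightarrow> succ_part (L (k + 1)) (L k)"
    "\<And>k. u 0 \<le> k \<Longrightarrow> k + 1 \<le> u N \<Longrightarrow> in_Dplus N u v k \<Longrightarrow> succ_part (L k) (L (k + 1))"
  using assms unfolding configs_def by auto

lemma chain_up:
  "(\<And>k. a \<le> k \<Longrightarrow> k < a + int n \<Longrightarrow> subpart (f k) (f (k + 1))) \<Longrightarrow> subpart (f a) (f (a + int n))"
proof (induction n)
  case 0 then show ?case by (simp add: subpart_def)
next
  case (Suc n)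
  have h1: "subpart (f a) (f (a + int n))" using Suc by auto
  have h2: "subpart (f (a + int n)) (f (a + int n + 1))" using Suc.prems[of "a + int n"] by auto
  have eq: "a + int (Suc n) = a + int n + 1" by simp
  show ?case unfolding eq by (rule subpart_trans[OF h1 h2])
qed

lemma chain_down:
  "(\<And>k. a \<le> k \<Longrightarrow> k < a + int n \<Longrightarrow> subpart (f (k + 1)) (f k)) \<Longrightarrow> subpart (f (a + int n)) (f a)"
proof (induction n)
  case 0 then show ?case by (simp add: subpart_def)
next
  case (Suc n)
  have h1: "subpart (f (a + int n)) (f a)" using Suc by auto
  have h2: "subpart (f (a + int n + 1)) (f (a + int n))" using Suc.prems[of "a + int n"] by auto
  have eq: "a + int (Suc n) = a + int n + 1" by simp
  show ?case unfolding eq by (rule subpart_trans[OF h2 h1])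
qed

lemma config_bound:
  assumes L: "L \<in> E" and t: "u 0 \<le> t" "t \<le> u N"
  shows "subpart (L t) Lam"
proof -
  have Lc: "L \<in> configs N u v" and pin: "\<And>i. i \<in> {1..N} \<Longrightarrow> L (v i) = lam i" using L by (auto simp: E_def)
  obtain i where i: "i \<in> {1..N}" "u (i - 1) \<le> t" "t \<le> u i"
  proof (cases "t < u N")
    case True then show ?thesis using find_seg[OF t(1)] that by force
  next
    case False
    then have "t = u N" using t by auto
    moreover have "u (N - 1) \<le> u N" using u_mono_le[of "N - 1" N] by auto
    ultimately show ?thesis using that[of N] N1 by auto
  qed
  have u0i: "u 0 \<le> u (i - 1)" using u_mono_le[of 0 "i - 1"] i by auto
  have uiN: "u i \<le> u N" using u_mono_le[of i N] i by auto
  have viu: "v i < u i" using ord[of i] i by auto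
  have "subpart (L t) (L (v i))"
  proof (cases "t \<le> v i")
    case True
    define n where "n = nat (v i - t)"
    have e: "t + int n = v i" using True by (auto simp: n_def)
    have "subpart (L t) (L (t + int n))"
    proof (rule chain_up)
      fix k assume k: "t \<le> k" "k < t + int n"
      have "succ_part (L (k + 1)) (L k)"
        using configsD(3)[OF Lc, of k] Dminus_in[OF i(1), of k] k e i u0i uiN viu by auto
      then show "subpart (L k) (L (k + 1))" by (rule succ_subpart)
    qed
    then show ?thesis using e by simp
  next
    case False
    define n where "n = nat (t - v i)"
    have e: "v i + int n = t" using False by (auto simp: n_def)
    have "subpart (L (v i + int n)) (L (v i))"
    proof (rule chain_down)
      fix k assume k: "v i \<le> k" "k < v i + int n"
      have "succ_part (L k) (L (k + 1))"
        using configsD(4)[OF Lc, of k] Dplus_in[OF i(1), of k] k e i u0i uiN viu ord[of i] by auto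
      then show "subpart (L (k + 1)) (L k)" by (rule succ_subpart)
    qed
    then show ?thesis using e by simp
  qed
  then show ?thesis using pin[OF i(1)] lam_Lam[OF i(1)] subpart_trans by metis
qed

end


context SP begin

lemma empty_part_partition: "empty_part \<in> partitions"
  by (auto simp: partitions_def empty_part_def)

lemma g_config:
  assumes L: "L \<in> configs N u v" and k: "u 0 \<le> k" "k < u N"
  shows "g k (L k) (L (k + 1)) = xp k ^ psize (L k) / xp k ^ psize (L (k + 1))"
proof (cases "in_Dminus N u v k")
  case True
  then show ?thesis using configsD(3)[OF L, of k] k by (simp add: g_def)
next
  case False
  then have "in_Dplus N u v k" using D_cover k by auto
  then show ?thesis using False configsD(4)[OF L, of k] k by (simp add: g_def)
qed

lemma sumE: "infsum (weight N u q) E = PS Bf g (u 0) (u N) empty_part empty_part"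
proof -
  let ?r = "\<lambda>L. restrict L {u 0..u N}"
  let ?P = "paths Bf (u 0) (u N) empty_part empty_part"
  let ?w = "\<lambda>c. \<Prod>k\<in>{u 0..<u N}. g k (c k) (c (k + 1))"
  have inP: "?r L \<in> ?P" if L: "L \<in> E" for L
  proof -
    have Lc: "L \<in> configs N u v" using L by (auto simp: E_def)
    have "L t \<in> Bf t" if "t \<in> {u 0..u N}" for t
      using config_bound[OF L, of t] that configsD(1)[OF Lc, of t] L
      by (auto simp: Bf_def Bset_def E_def)
    moreover have "L (u 0) = empty_part" "L (u N) = empty_part" using configsD(2)[OF Lc] by auto
    ultimately show ?thesis using u0_lt_uN by (auto simp: paths_def)
  qed
  have wL: "weight N u q L = ?w (?r L)" if L: "L \<in> E" for L
  proof -
    have Lc: "L \<in> configs N u v" using L by (auto simp: E_def)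
    have "L (u 0) = empty_part" "L (u N) = empty_part" using configsD(2)[OF Lc] by auto
    then have "weight N u q L = (\<Prod>k\<in>{u 0..<u N}. xp k ^ psize (L k) / xp k ^ psize (L (k + 1)))"
      by (intro weight_tele) auto
    also have "\<dots> = ?w (?r L)"
      using g_config[OF Lc] by (intro prod.cong refl) auto
    finally show ?thesis .
  qed
  have inj: "inj_on ?r E"
  proof (rule inj_onI)
    fix L1 L2 assume L1: "L1 \<in> E" and L2: "L2 \<in> E" and e: "?r L1 = ?r L2"
    show "L1 = L2"
    proof
      fix t show "L1 t = L2 t"
      proof (cases "t \<in> {u 0..u N}")
        case True then show ?thesis using fun_cong[OF e, of t] by simp
      next
        case False
        then have "t \<le> u 0 \<or> u N \<le> t" by auto
        then show ?thesis using configsD(2)[of L1] configsD(2)[of L2] L1 L2 by (auto simp: E_def)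
      qed
    qed
  qed
  have finP: "finite ?P" by (rule finite_paths[OF finite_Bf])
  have finE: "finite E"
    by (rule finite_imageD[OF finite_subset[OF _ finP] inj]) (use inP in auto)
  have zero: "?w c = 0" if c: "c \<in> ?P - ?r ` E" for c
  proof (rule ccontr)
    assume nz: "?w c \<noteq> 0"
    then have gnz: "g k (c k) (c (k + 1)) \<noteq> 0" if "k \<in> {u 0..<u N}" for k
      using that by (auto simp: prod_zero_iff)
    have cP: "c \<in> Pi\<^sub>E {u 0..u N} Bf" "c (u 0) = empty_part" "c (u N) = empty_part"
      using c by (auto simp: paths_def)
    define L where "L t = (if t \<in> {u 0..u N} then c t else empty_part)" for t
    have "L \<in> configs N u v"
      unfolding configs_def
    proof (intro CollectI conjI allI impI)
      fix t show "L t \<in> partitions"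
        using cP(1) empty_part_partition by (auto simp: L_def Bf_def Bset_def PiE_iff)
    next
      fix t assume "t \<le> u 0 \<or> u N \<le> t"
      then show "L t = empty_part" using cP by (auto simp: L_def)
    next
      fix k assume k: "u 0 \<le> k \<and> k + 1 \<le> u N" and D: "in_Dminus N u v k"
      have "g k (c k) (c (k + 1)) \<noteq> 0" using gnz k by auto
      then show "succ_part (L (k + 1)) (L k)" using D k by (auto simp: g_def L_def split: if_splits)
    next
      fix k assume k: "u 0 \<le> k \<and> k + 1 \<le> u N" and D: "in_Dplus N u v k"
      have "g k (c k) (c (k + 1)) \<noteq> 0" using gnz k by auto
      then show "succ_part (L k) (L (k + 1))" using D Dplus_not_Dminus[OF D] k
        by (auto simp: g_def L_def split: if_splits)
    qed
    moreover have "L (v i) = lam i" if i: "i \<in> {1..N}" for i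
    proof -
      have "u 0 \<le> u (i - 1)" using u_mono_le[of 0 "i - 1"] i by auto
      then have "u 0 \<le> v i" "v i \<le> u N" using ord[of i] u_mono_le[of i N] i by auto
      then have "c (v i) \<in> Bf (v i)" using cP(1) by (auto simp: PiE_iff)
      then show ?thesis using Bf_v[OF i] \<open>u 0 \<le> v i\<close> \<open>v i \<le> u N\<close> by (auto simp: L_def)
    qed
    ultimately have "L \<in> E" by (auto simp: E_def)
    moreover have "?r L = c"
    proof
      fix t show "?r L t = c t" using cP(1) by (auto simp: L_def PiE_iff extensional_def)
    qed
    ultimately show False using c by auto
  qed
  have "infsum (weight N u q) E = (\<Sum>L\<in>E. weight N u q L)" using finE by simp
  also have "\<dots> = (\<Sum>L\<in>E. ?w (?r L))" using wL by (intro sum.cong) auto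
  also have "\<dots> = (\<Sum>c\<in>?r ` E. ?w c)" by (rule sum.reindex[OF inj, unfolded comp_def, symmetric])
  also have "\<dots> = (\<Sum>c\<in>?P. ?w c)"
    by (rule sum.mono_neutral_left[OF finP]) (use inP zero in auto)
  also have "\<dots> = PS Bf g (u 0) (u N) empty_part empty_part" by (simp add: PS_def)
  finally show ?thesis .
qed

lemma C_infsum:
  assumes i: "i \<in> {1..<N}"
  shows "(\<Sum>\<^sub>\<infinity>\<nu>\<in>partitions. skew_schur (lam i) \<nu> (Xplus u v q i) * skew_schur (lam (i + 1)) \<nu> (Xminus u v q (i + 1))) = C i"
proof -
  have i1: "i \<in> {1..N}" "i + 1 \<in> {1..N}" using i by auto
  let ?f = "\<lambda>\<nu>. skew_schur (lam i) \<nu> (Xplus u v q i) * skew_schur (lam (i + 1)) \<nu> (Xminus u v q (i + 1))"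
  have "(\<Sum>\<^sub>\<infinity>\<nu>\<in>partitions. ?f \<nu>) = (\<Sum>\<^sub>\<infinity>\<nu>\<in>Bset Lam. ?f \<nu>)"
  proof (rule infsum_cong_neutral)
    fix x assume "x \<in> partitions - Bset Lam"
    then have "\<not> subpart x (lam i)" using lam_Lam[OF i1(1)] subpart_trans by (auto simp: Bset_def)
    then show "?f x = 0" by (simp add: skew_schur_def)
  qed (auto simp: Bset_def)
  also have "\<dots> = (\<Sum>\<nu>\<in>Bset Lam. ?f \<nu>)" using finite_Bset by simp
  also have "\<dots> = C i" unfolding C_def
    using schur_chain[of "lam i"] schur_chain[of "lam (i + 1)"] lamp i1
    by (intro sum.cong refl) (auto simp: Bset_def)
  finally show ?thesis .
qed

lemma main_eq:
  "prob N u v q (\<lambda>L. \<forall>i\<in>{1..N}. L (v i) = lam i) =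
    (1 / partition_fn N u v q) * schur (lam 1) (Xminus u v q 1)
    * (\<Prod>i\<in>{1..<N}. (\<Sum>\<^sub>\<infinity>\<nu>\<in>partitions.
          skew_schur (lam i) \<nu> (Xplus u v q i) * skew_schur (lam (i + 1)) \<nu> (Xminus u v q (i + 1))))
    * schur (lam N) (Xplus u v q N)"
proof -
  have i1: "1 \<in> {1..N}" "N \<in> {1..N}" using N1 by auto
  have s1: "schur (lam 1) (Xminus u v q 1) = chainS empty_part (lam 1) (Xminus u v q 1)"
    unfolding schur_def using schur_chain lamp i1 empty_part_partition by auto
  have sN: "schur (lam N) (Xplus u v q N) = chainS empty_part (lam N) (Xplus u v q N)"
    unfolding schur_def using schur_chain lamp i1 empty_part_partition by auto
  have P: "(\<Prod>i\<in>{1..<N}. (\<Sum>\<^sub>\<infinity>\<nu>\<in>partitions.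
          skew_schur (lam i) \<nu> (Xplus u v q i) * skew_schur (lam (i + 1)) \<nu> (Xminus u v q (i + 1)))) = (\<Prod>i\<in>{1..<N}. C i)"
    by (intro prod.cong refl C_infsum)
  have "prob N u v q (\<lambda>L. \<forall>i\<in>{1..N}. L (v i) = lam i) = infsum (weight N u q) E / partition_fn N u v q"
    by (simp add: prob_def E_def)
  also have "\<dots> = G N * chainS empty_part (lam N) (Xplus u v q N) / partition_fn N u v q"
    by (simp add: sumE PS_total)
  finally show ?thesis unfolding s1 sN P by (simp add: G_def)
qed

end


theorem mainTheorem1:
  fixes N :: nat and u v :: "nat \<Rightarrow> int" and q :: "int \<Rightarrow> real"
    and lam :: "nat \<Rightarrow> nat \<Rightarrow> nat"
  assumes "N \<ge> 1"
    and "\<And>i. 1 \<le> i \<Longrightarrow> i \<le> N \<Longrightarrow> u (i - 1) < v i \<and> v i < u i"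
    and "\<And>t. u 0 < t \<Longrightarrow> t < u N \<Longrightarrow> 0 < q t \<and> q t < 1"
    and "\<And>i. 1 \<le> i \<Longrightarrow> i \<le> N \<Longrightarrow> lam i \<in> partitions"
  shows "prob N u v q (\<lambda>L. \<forall>i\<in>{1..N}. L (v i) = lam i) =
    (1 / partition_fn N u v q) * schur (lam 1) (Xminus u v q 1)
    * (\<Prod>i\<in>{1..<N}. (\<Sum>\<^sub>\<infinity>\<nu>\<in>partitions.
          skew_schur (lam i) \<nu> (Xplus u v q i) * skew_schur (lam (i + 1)) \<nu> (Xminus u v q (i + 1))))
    * schur (lam N) (Xplus u v q N)"
proof -
  interpret SP N u v q lam by unfold_locales (use assms in auto)
  show ?thesis by (rule main_eq)
qed

end
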